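(* Let $G$ be a finite group, $T$ a $G$-Tambara functor, and $I,J$ Tambara ideals of $T$. Then $\sqrt{IJ}=\sqrt I\cap\sqrt J$.
   Context: All rings are commutative with unit. A $G$-Tambara functor $T$ consists of commutative rings $T(G/H)$ for subgroups $H\le G$ with restriction ring maps, additive transfer maps, multiplicative norm maps and conjugation isomorphisms satisfying the standard Tambara axioms (Hill–Mazur). A Tambara ideal is a family of ring ideals $I(G/H)\subseteq T(G/H)$ closed under restriction, transfer, norm and conjugation; intersections are levelwise. $\langle x\rangle$ is the Tambara ideal generated by $x$. The product $IJ$ is the Tambara ideal generated by the levelwise products $I(G/H)\cdot J(G/H)$, $H\le G$. The radical $\sqrt I$ is the Tambara ideal with $\sqrt I(G/H)=\{x\in T(G/H)\mid \langle x\rangle^n\subseteq I\text{ for some }n\ge1\}$, $\langle x\rangle^n$ the $n$-fold product. *)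

theory Defs
  imports "HOL-Algebra.Algebra" "HOL-Library.FuncSet"
begin

text \<open>A G-Tambara functor is given by its values T(G/H) at the subgroups H of G
  (all levels live in one ambient element type 'r, each with its own carrier), together with
  restrictions tres H K : T(H) -> T(K), transfers ttr K H : T(K) -> T(H) and norms
  tnm K H : T(K) -> T(H) for K <= H, and conjugations tcj g H : T(H) -> T(gHg^-1).\<close>

record ('g, 'r) tambara =
  tlev :: "'g set \<Rightarrow> 'r ring"
  tres :: "'g set \<Rightarrow> 'g set \<Rightarrow> 'r \<Rightarrow> 'r"
  ttr  :: "'g set \<Rightarrow> 'g set \<Rightarrow> 'r \<Rightarrow> 'r"
  tnm  :: "'g set \<Rightarrow> 'g set \<Rightarrow> 'r \<Rightarrow> 'r"
  tcj  :: "'g \<Rightarrow> 'g set \<Rightarrow> 'r \<Rightarrow> 'r"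

definition conjg :: "('g, 'b) monoid_scheme \<Rightarrow> 'g \<Rightarrow> 'g set \<Rightarrow> 'g set" where
  "conjg G g K = (\<lambda>k. g \<otimes>\<^bsub>G\<^esub> k \<otimes>\<^bsub>G\<^esub> inv\<^bsub>G\<^esub> g) ` K"

definition subgrp_le :: "('g, 'b) monoid_scheme \<Rightarrow> 'g set \<Rightarrow> 'g set \<Rightarrow> bool" where
  "subgrp_le G K H \<longleftrightarrow> subgroup K G \<and> subgroup H G \<and> K \<subseteq> H"

definition lcos :: "('g, 'b) monoid_scheme \<Rightarrow> 'g set \<Rightarrow> 'g set \<Rightarrow> 'g set set" where
  "lcos G H K = {l_coset G h K | h. h \<in> H}"

definition dcos :: "('g, 'b) monoid_scheme \<Rightarrow> 'g set \<Rightarrow> 'g set \<Rightarrow> 'g set \<Rightarrow> 'g set set" where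
  "dcos G H K L = {set_mult G (r_coset G K g) L | g. g \<in> H}"

text \<open>Exponential diagram data for H/K <- (disjoint union over i<n of H/L_i) (where L_i <= K <= H),
  pushed forward to H/H: the H-set of sections of the projection.\<close>

definition efib :: "('g, 'b) monoid_scheme \<Rightarrow> 'g set \<Rightarrow> 'g set \<Rightarrow> nat \<Rightarrow> (nat \<Rightarrow> 'g set)
    \<Rightarrow> 'g set \<Rightarrow> (nat \<times> 'g set) set" where
  "efib G H K n L x = {(i, C) | i C. i < n \<and> C \<in> lcos G H (L i) \<and> set_mult G C K = x}"

definition esections :: "('g, 'b) monoid_scheme \<Rightarrow> 'g set \<Rightarrow> 'g set \<Rightarrow> nat \<Rightarrow> (nat \<Rightarrow> 'g set)
    \<Rightarrow> ('g set \<Rightarrow> nat \<times> 'g set) set" where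
  "esections G H K n L = PiE (lcos G H K) (efib G H K n L)"

definition esact :: "('g, 'b) monoid_scheme \<Rightarrow> 'g set \<Rightarrow> 'g set \<Rightarrow> 'g
    \<Rightarrow> ('g set \<Rightarrow> nat \<times> 'g set) \<Rightarrow> ('g set \<Rightarrow> nat \<times> 'g set)" where
  "esact G H K h s = (\<lambda>x \<in> lcos G H K.
      (fst (s (l_coset G (inv\<^bsub>G\<^esub> h) x)), l_coset G h (snd (s (l_coset G (inv\<^bsub>G\<^esub> h) x)))))"

definition estab :: "('g, 'b) monoid_scheme \<Rightarrow> 'g set \<Rightarrow> 'g set
    \<Rightarrow> ('g set \<Rightarrow> nat \<times> 'g set) \<Rightarrow> 'g set" where
  "estab G H K s = {h \<in> H. esact G H K h s = s}"

definition eorbits :: "('g, 'b) monoid_scheme \<Rightarrow> 'g set \<Rightarrow> 'g set \<Rightarrow> nat \<Rightarrow> (nat \<Rightarrow> 'g set)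
    \<Rightarrow> ('g set \<Rightarrow> nat \<times> 'g set) set set" where
  "eorbits G H K n L = {{esact G H K h s | h. h \<in> H} | s. s \<in> esections G H K n L}"

text \<open>Orbit representatives are chosen with SOME; the value does not
  depend on the choice.\<close>
definition eterm :: "('g, 'b) monoid_scheme \<Rightarrow> ('g, 'r) tambara \<Rightarrow> 'g set \<Rightarrow> 'g set
    \<Rightarrow> (nat \<Rightarrow> 'g set) \<Rightarrow> (nat \<Rightarrow> 'r) \<Rightarrow> ('g set \<Rightarrow> nat \<times> 'g set) \<Rightarrow> 'r" where
  "eterm G T H K L a s =
    (let S = estab G H K s in
     ttr T S H
      (\<Otimes>\<^bsub>tlev T S\<^esub> Ob \<in> {{l_coset G h x | h. h \<in> S} | x. x \<in> lcos G H K}.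
         (let x = (SOME x. x \<in> Ob);
              h = (SOME h. h \<in> x);
              i = fst (s x);
              h' = (SOME h'. h' \<in> snd (s x));
              Sx = S \<inter> conjg G h K
          in tnm T Sx S (tres T (conjg G h' (L i)) Sx (tcj T h' (L i) (a i))))))"

definition eformula :: "('g, 'b) monoid_scheme \<Rightarrow> ('g, 'r) tambara \<Rightarrow> 'g set \<Rightarrow> 'g set
    \<Rightarrow> nat \<Rightarrow> (nat \<Rightarrow> 'g set) \<Rightarrow> (nat \<Rightarrow> 'r) \<Rightarrow> 'r" where
  "eformula G T H K n L a =
     (\<Oplus>\<^bsub>tlev T H\<^esub> Ob \<in> eorbits G H K n L. eterm G T H K L a (SOME s. s \<in> Ob))"

definition tambara_functor :: "('g, 'b) monoid_scheme \<Rightarrow> ('g, 'r) tambara \<Rightarrow> bool" where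
  "tambara_functor G T \<longleftrightarrow>
    \<comment> \<open>levels are commutative rings\<close>
    (\<forall>H. subgroup H G \<longrightarrow> cring (tlev T H)) \<and>
    \<comment> \<open>restriction: ring maps; transfer: additive; norm: multiplicative, unital\<close>
    (\<forall>H K. subgrp_le G K H \<longrightarrow>
       tres T H K \<in> ring_hom (tlev T H) (tlev T K) \<and>
       tres T H K \<in> carrier (tlev T H) \<rightarrow> carrier (tlev T K) \<and>
       ttr T K H \<in> carrier (tlev T K) \<rightarrow> carrier (tlev T H) \<and>
       (\<forall>a \<in> carrier (tlev T K). \<forall>b \<in> carrier (tlev T K).
          ttr T K H (a \<oplus>\<^bsub>tlev T K\<^esub> b) = ttr T K H a \<oplus>\<^bsub>tlev T H\<^esub> ttr T K H b) \<and>
       tnm T K H \<in> carrier (tlev T K) \<rightarrow> carrier (tlev T H) \<and>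
       tnm T K H \<one>\<^bsub>tlev T K\<^esub> = \<one>\<^bsub>tlev T H\<^esub> \<and>
       (\<forall>a \<in> carrier (tlev T K). \<forall>b \<in> carrier (tlev T K).
          tnm T K H (a \<otimes>\<^bsub>tlev T K\<^esub> b) = tnm T K H a \<otimes>\<^bsub>tlev T H\<^esub> tnm T K H b) \<and>
       \<comment> \<open>Frobenius reciprocity\<close>
       (\<forall>a \<in> carrier (tlev T K). \<forall>b \<in> carrier (tlev T H).
          ttr T K H a \<otimes>\<^bsub>tlev T H\<^esub> b = ttr T K H (a \<otimes>\<^bsub>tlev T K\<^esub> tres T H K b))) \<and>
    \<comment> \<open>identities\<close>
    (\<forall>H. subgroup H G \<longrightarrow> (\<forall>a \<in> carrier (tlev T H).
       tres T H H a = a \<and> ttr T H H a = a \<and> tnm T H H a = a)) \<and>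
    \<comment> \<open>transitivity\<close>
    (\<forall>H K L. subgrp_le G L K \<longrightarrow> subgrp_le G K H \<longrightarrow>
       (\<forall>a \<in> carrier (tlev T H). tres T K L (tres T H K a) = tres T H L a) \<and>
       (\<forall>a \<in> carrier (tlev T L). ttr T K H (ttr T L K a) = ttr T L H a) \<and>
       (\<forall>a \<in> carrier (tlev T L). tnm T K H (tnm T L K a) = tnm T L H a)) \<and>
    \<comment> \<open>conjugations\<close>
    (\<forall>g \<in> carrier G. \<forall>H. subgroup H G \<longrightarrow>
       tcj T g H \<in> ring_hom (tlev T H) (tlev T (conjg G g H))) \<and>
    (\<forall>H. subgroup H G \<longrightarrow> (\<forall>h \<in> H. \<forall>a \<in> carrier (tlev T H). tcj T h H a = a)) \<and>
    (\<forall>g \<in> carrier G. \<forall>g' \<in> carrier G. \<forall>H. subgroup H G \<longrightarrow> (\<forall>a \<in> carrier (tlev T H).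
       tcj T g (conjg G g' H) (tcj T g' H a) = tcj T (g \<otimes>\<^bsub>G\<^esub> g') H a)) \<and>
    (\<forall>g \<in> carrier G. \<forall>H K. subgrp_le G K H \<longrightarrow>
       (\<forall>a \<in> carrier (tlev T H).
          tcj T g K (tres T H K a) = tres T (conjg G g H) (conjg G g K) (tcj T g H a)) \<and>
       (\<forall>a \<in> carrier (tlev T K).
          tcj T g H (ttr T K H a) = ttr T (conjg G g K) (conjg G g H) (tcj T g K a)) \<and>
       (\<forall>a \<in> carrier (tlev T K).
          tcj T g H (tnm T K H a) = tnm T (conjg G g K) (conjg G g H) (tcj T g K a))) \<and>
    \<comment> \<open>additive and multiplicative double coset (Mackey) formulas\<close>
    (\<forall>H K L. subgrp_le G K H \<longrightarrow> subgrp_le G L H \<longrightarrow> (\<forall>a \<in> carrier (tlev T L).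
       tres T H K (ttr T L H a) =
         (\<Oplus>\<^bsub>tlev T K\<^esub> D \<in> dcos G H K L.
            (let g = (SOME g. g \<in> D); M = conjg G (inv\<^bsub>G\<^esub> g) K \<inter> L in
             ttr T (K \<inter> conjg G g L) K (tcj T g M (tres T L M a)))) \<and>
       tres T H K (tnm T L H a) =
         (\<Otimes>\<^bsub>tlev T K\<^esub> D \<in> dcos G H K L.
            (let g = (SOME g. g \<in> D); M = conjg G (inv\<^bsub>G\<^esub> g) K \<inter> L in
             tnm T (K \<inter> conjg G g L) K (tcj T g M (tres T L M a)))))) \<and>
    \<comment> \<open>Tambara reciprocity: the exponential formula for the norm of a finite sum of transfers
       (covers the norm of a sum, the norm of a transfer and the norm of zero)\<close>
    (\<forall>H K n L a. subgrp_le G K H \<longrightarrow> (\<forall>i < n. subgrp_le G (L i) K) \<longrightarrow>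
       (\<forall>i < n. a i \<in> carrier (tlev T (L i))) \<longrightarrow>
       tnm T K H (\<Oplus>\<^bsub>tlev T K\<^esub> i \<in> {..<n}. ttr T (L i) K (a i)) = eformula G T H K n L a)"

definition tambara_ideal :: "('g, 'b) monoid_scheme \<Rightarrow> ('g, 'r) tambara \<Rightarrow> ('g set \<Rightarrow> 'r set) \<Rightarrow> bool" where
  "tambara_ideal G T I \<longleftrightarrow>
    (\<forall>H. subgroup H G \<longrightarrow> ideal (I H) (tlev T H)) \<and>
    (\<forall>H K. subgrp_le G K H \<longrightarrow>
       tres T H K ` I H \<subseteq> I K \<and> ttr T K H ` I K \<subseteq> I H \<and> tnm T K H ` I K \<subseteq> I H) \<and>
    (\<forall>g \<in> carrier G. \<forall>H. subgroup H G \<longrightarrow> tcj T g H ` I H \<subseteq> I (conjg G g H))"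

text \<open>Levelwise inclusion (only the levels at subgroups are meaningful)\<close>
definition tideal_le :: "('g, 'b) monoid_scheme \<Rightarrow> ('g set \<Rightarrow> 'r set) \<Rightarrow> ('g set \<Rightarrow> 'r set) \<Rightarrow> bool" where
  "tideal_le G I J \<longleftrightarrow> (\<forall>H. subgroup H G \<longrightarrow> I H \<subseteq> J H)"

definition tgen :: "('g, 'b) monoid_scheme \<Rightarrow> ('g, 'r) tambara \<Rightarrow> ('g set \<Rightarrow> 'r set) \<Rightarrow> ('g set \<Rightarrow> 'r set)" where
  "tgen G T Xs = (\<lambda>H. {r. \<forall>J. tambara_ideal G T J \<and> tideal_le G Xs J \<longrightarrow> r \<in> J H})"

definition tgen1 :: "('g, 'b) monoid_scheme \<Rightarrow> ('g, 'r) tambara \<Rightarrow> 'g set \<Rightarrow> 'r \<Rightarrow> ('g set \<Rightarrow> 'r set)" where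
  "tgen1 G T H0 x = tgen G T (\<lambda>K. if K = H0 then {x} else {})"

definition tprod :: "('g, 'b) monoid_scheme \<Rightarrow> ('g, 'r) tambara \<Rightarrow> ('g set \<Rightarrow> 'r set) \<Rightarrow> ('g set \<Rightarrow> 'r set) \<Rightarrow> ('g set \<Rightarrow> 'r set)" where
  "tprod G T I J = tgen G T (\<lambda>H. ideal_prod (tlev T H) (I H) (J H))"

fun tpow :: "('g, 'b) monoid_scheme \<Rightarrow> ('g, 'r) tambara \<Rightarrow> ('g set \<Rightarrow> 'r set) \<Rightarrow> nat \<Rightarrow> ('g set \<Rightarrow> 'r set)" where
  "tpow G T A 0 = (\<lambda>H. carrier (tlev T H))"
| "tpow G T A (Suc 0) = A"
| "tpow G T A (Suc (Suc n)) = tprod G T (tpow G T A (Suc n)) A"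

definition trad :: "('g, 'b) monoid_scheme \<Rightarrow> ('g, 'r) tambara \<Rightarrow> ('g set \<Rightarrow> 'r set) \<Rightarrow> ('g set \<Rightarrow> 'r set)" where
  "trad G T I = (\<lambda>H. {x \<in> carrier (tlev T H). \<exists>n \<ge> 1. tideal_le G (tpow G T (tgen1 G T H x) n) I})"

end

theory Submission imports Defs begin

lemma imgD: "f ` A \<subseteq> B \<Longrightarrow> a \<in> A \<Longrightarrow> f a \<in> B" by blast

lemma (in ring) finsum_in_set:
  assumes V: "V \<subseteq> carrier R" "\<zero> \<in> V" "\<And>a b. a \<in> V \<Longrightarrow> b \<in> V \<Longrightarrow> a \<oplus> b \<in> V"
  shows "f \<in> A \<rightarrow> V \<Longrightarrow> finsum R f A \<in> V"
proof (induction A rule: infinite_finite_induct)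
  case (infinite A) then show ?case using V by simp
next
  case empty then show ?case using V by simp
next
  case (insert a A)
  have fc: "f \<in> A \<rightarrow> carrier R" "f a \<in> carrier R" using insert.prems V(1) by auto
  have "finsum R f (insert a A) = f a \<oplus> finsum R f A"
    using insert.hyps fc by (simp add: finsum_insert)
  then show ?case using insert V by auto
qed

lemma (in ring) finsum_concat:
  "f \<in> {..<n+m} \<rightarrow> carrier R \<Longrightarrow>
   finsum R f {..<n+(m::nat)} = finsum R f {..<n} \<oplus> finsum R (\<lambda>i. f (n+i)) {..<m}"
proof (induct m)
  case 0 then show ?case by (simp add: Pi_def)
next
  case (Suc m)
  have f1: "f \<in> {..<n+m} \<rightarrow> carrier R" using Suc.prems by auto
  have f2: "f (n+m) \<in> carrier R" using Suc.prems by auto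
  have e1: "finsum R f {..<n+Suc m} = f (n+m) \<oplus> finsum R f {..<n+m}"
    using f1 f2 by (simp add: lessThan_Suc finsum_insert)
  have e2: "finsum R (\<lambda>i. f (n+i)) {..<Suc m} = f (n+m) \<oplus> finsum R (\<lambda>i. f (n+i)) {..<m}"
    using f1 f2 by (simp add: lessThan_Suc finsum_insert Pi_def)
  have c1: "finsum R f {..<n} \<in> carrier R" using f1 by (intro finsum_closed) auto
  have c2: "finsum R (\<lambda>i. f (n+i)) {..<m} \<in> carrier R" using f1 by (intro finsum_closed) auto
  show ?case unfolding e1 e2 Suc.hyps[OF f1] using c1 c2 f2 by (simp add: a_ac)
qed

lemma (in cring) finprod_in_ideal:
  assumes I: "ideal I R" and A: "finite A" "A \<noteq> {}"
  shows "f \<in> A \<rightarrow> I \<Longrightarrow> finprod R f A \<in> I"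
  using A
proof (induct A rule: finite_ne_induct)
  case (singleton a)
  have "f a \<in> carrier R" using singleton ideal.Icarr[OF I] by auto
  then show ?case using singleton by simp
next
  case (insert a A)
  have fc: "f \<in> A \<rightarrow> carrier R" "f a \<in> carrier R" using insert.prems ideal.Icarr[OF I] by auto
  have "finprod R f (insert a A) = f a \<otimes> finprod R f A"
    using insert.hyps fc by simp
  then show ?case using insert ideal.I_l_closed[OF I] fc by auto
qed

lemma (in ring) finsum_one_elem: "f 0 \<in> carrier R \<Longrightarrow> finsum R f {..<Suc 0} = f 0"
proof -
  assume f: "f 0 \<in> carrier R"
  have e: "{..<Suc 0} = insert 0 {}" by auto
  show ?thesis unfolding e using f by (simp add: finsum_insert)
qed

lemma add_hom_zero:
  assumes R: "ring R" and S: "ring S" and h: "h \<in> carrier R \<rightarrow> carrier S"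
    and add: "\<And>a b. a \<in> carrier R \<Longrightarrow> b \<in> carrier R \<Longrightarrow> h (a \<oplus>\<^bsub>R\<^esub> b) = h a \<oplus>\<^bsub>S\<^esub> h b"
  shows "h \<zero>\<^bsub>R\<^esub> = \<zero>\<^bsub>S\<^esub>"
proof -
  interpret R: ring R by fact
  interpret S: ring S by fact
  have c: "h \<zero>\<^bsub>R\<^esub> \<in> carrier S" using h by auto
  have "h \<zero>\<^bsub>R\<^esub> \<oplus>\<^bsub>S\<^esub> h \<zero>\<^bsub>R\<^esub> = h \<zero>\<^bsub>R\<^esub> \<oplus>\<^bsub>S\<^esub> \<zero>\<^bsub>S\<^esub>"
    using add[of "\<zero>\<^bsub>R\<^esub>" "\<zero>\<^bsub>R\<^esub>"] c by simp
  then show ?thesis using c by simp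
qed

lemma add_hom_finsum:
  assumes R: "ring R" and S: "ring S" and h: "h \<in> carrier R \<rightarrow> carrier S"
    and add: "\<And>a b. a \<in> carrier R \<Longrightarrow> b \<in> carrier R \<Longrightarrow> h (a \<oplus>\<^bsub>R\<^esub> b) = h a \<oplus>\<^bsub>S\<^esub> h b"
  shows "f \<in> A \<rightarrow> carrier R \<Longrightarrow> h (finsum R f A) = finsum S (h \<circ> f) A"
proof (induct A rule: infinite_finite_induct)
  case (infinite A) then show ?case using add_hom_zero[OF R S h add]
    by (simp add: finsum_def finprod_def)
next
  case empty
  interpret R: ring R by fact
  interpret S: ring S by fact
  show ?case using add_hom_zero[OF R S h add] by simp
next
  case (insert a A)
  interpret R: ring R by fact
  interpret S: ring S by fact
  have fc: "f \<in> A \<rightarrow> carrier R" "f a \<in> carrier R" using insert.prems by auto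
  have hc: "h \<circ> f \<in> A \<rightarrow> carrier S" "h (f a) \<in> carrier S" using fc h by auto
  have "h (finsum R f (insert a A)) = h (f a \<oplus>\<^bsub>R\<^esub> finsum R f A)"
    using insert.hyps fc by (simp add: R.finsum_insert)
  also have "\<dots> = h (f a) \<oplus>\<^bsub>S\<^esub> finsum S (h \<circ> f) A"
    using add fc insert.hyps(3) by (simp add: R.finsum_closed comp_def)
  also have "\<dots> = finsum S (h \<circ> f) (insert a A)"
    using insert.hyps hc by (simp add: S.finsum_insert)
  finally show ?case .
qed

lemma ring_hom_finsum':
  assumes R: "ring R" and S: "ring S" and h: "h \<in> ring_hom R S"
  shows "f \<in> A \<rightarrow> carrier R \<Longrightarrow> h (finsum R f A) = finsum S (h \<circ> f) A"
  by (rule add_hom_finsum[OF R S]) (use h in \<open>auto simp: ring_hom_def\<close>)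

definition VV :: "('g, 'b) monoid_scheme \<Rightarrow> ('g, 'r) tambara \<Rightarrow> ('g set \<Rightarrow> 'r set) \<Rightarrow> ('g set \<Rightarrow> 'r set) \<Rightarrow> 'g set \<Rightarrow> 'r set" where
  "VV G T XX YY H = {finsum (tlev T H) (\<lambda>i. ttr T (L i) H (xs i \<otimes>\<^bsub>tlev T (L i)\<^esub> ys i)) {..<(n::nat)} | n L xs ys.
      \<forall>i<n. subgrp_le G (L i) H \<and> xs i \<in> XX (L i) \<and> ys i \<in> YY (L i)}"

locale tamb = group +
  fixes T :: "('a,'r) tambara"
  assumes TF: "tambara_functor G T" and finG: "finite (carrier G)"
begin

lemmas TFU = TF[unfolded tambara_functor_def]
lemmas A1 = TFU[THEN conjunct1, rule_format]
lemmas A2 = TFU[THEN conjunct2, THEN conjunct1, rule_format]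
lemmas A3 = TFU[THEN conjunct2, THEN conjunct2, THEN conjunct1, rule_format]
lemmas A4 = TFU[THEN conjunct2, THEN conjunct2, THEN conjunct2, THEN conjunct1, rule_format]
lemmas A5 = TFU[THEN conjunct2, THEN conjunct2, THEN conjunct2, THEN conjunct2, THEN conjunct1, rule_format]
lemmas A8 = TFU[THEN conjunct2, THEN conjunct2, THEN conjunct2, THEN conjunct2, THEN conjunct2,
  THEN conjunct2, THEN conjunct2, THEN conjunct1, rule_format]
lemmas A9 = TFU[THEN conjunct2, THEN conjunct2, THEN conjunct2, THEN conjunct2, THEN conjunct2,
  THEN conjunct2, THEN conjunct2, THEN conjunct2, THEN conjunct1, rule_format]
lemmas A10 = TFU[THEN conjunct2, THEN conjunct2, THEN conjunct2, THEN conjunct2, THEN conjunct2,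
  THEN conjunct2, THEN conjunct2, THEN conjunct2, THEN conjunct2, rule_format]

lemma cr: "subgroup H G \<Longrightarrow> cring (tlev T H)"
  by (rule A1)

lemma rg: "subgroup H G \<Longrightarrow> ring (tlev T H)"
  using cr cring.axioms(1) by blast

context
  fixes K H assumes KH: "subgrp_le G K H"
begin
lemma res_hom: "tres T H K \<in> ring_hom (tlev T H) (tlev T K)"
  using A2[OF KH] by (elim conjE)
lemma res_carr: "a \<in> carrier (tlev T H) \<Longrightarrow> tres T H K a \<in> carrier (tlev T K)"
  using A2[OF KH] by (elim conjE) blast
lemma tr_carr: "a \<in> carrier (tlev T K) \<Longrightarrow> ttr T K H a \<in> carrier (tlev T H)"
  using A2[OF KH] by (elim conjE) blast
lemma nm_carr: "a \<in> carrier (tlev T K) \<Longrightarrow> tnm T K H a \<in> carrier (tlev T H)"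
  using A2[OF KH] by (elim conjE) blast
lemma tr_add: "a \<in> carrier (tlev T K) \<Longrightarrow> b \<in> carrier (tlev T K) \<Longrightarrow>
   ttr T K H (a \<oplus>\<^bsub>tlev T K\<^esub> b) = ttr T K H a \<oplus>\<^bsub>tlev T H\<^esub> ttr T K H b"
  using A2[OF KH] by (elim conjE) blast
lemma nm_mult: "a \<in> carrier (tlev T K) \<Longrightarrow> b \<in> carrier (tlev T K) \<Longrightarrow>
   tnm T K H (a \<otimes>\<^bsub>tlev T K\<^esub> b) = tnm T K H a \<otimes>\<^bsub>tlev T H\<^esub> tnm T K H b"
  using A2[OF KH] by (elim conjE) blast
lemma frob: "a \<in> carrier (tlev T K) \<Longrightarrow> b \<in> carrier (tlev T H) \<Longrightarrow>
   ttr T K H a \<otimes>\<^bsub>tlev T H\<^esub> b = ttr T K H (a \<otimes>\<^bsub>tlev T K\<^esub> tres T H K b)"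
  using A2[OF KH] by (elim conjE) blast
lemma mackey: "subgrp_le G L H \<Longrightarrow> a \<in> carrier (tlev T L) \<Longrightarrow>
       tres T H K (ttr T L H a) =
         (\<Oplus>\<^bsub>tlev T K\<^esub> D \<in> dcos G H K L.
            (let g = (SOME g. g \<in> D); M = conjg G (inv\<^bsub>G\<^esub> g) K \<inter> L in
             ttr T (K \<inter> conjg G g L) K (tcj T g M (tres T L M a))))"
  using A9[OF KH] by blast
lemma expo: "(\<forall>i < n. subgrp_le G (L i) K) \<Longrightarrow>
       (\<forall>i < n. a i \<in> carrier (tlev T (L i))) \<Longrightarrow>
       tnm T K H (\<Oplus>\<^bsub>tlev T K\<^esub> i \<in> {..<n}. ttr T (L i) K (a i)) = eformula G T H K n L a"
  using A10[OF KH] by blast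
end

lemma tr_id: "subgroup H G \<Longrightarrow> a \<in> carrier (tlev T H) \<Longrightarrow> ttr T H H a = a"
  using A3 by blast
lemma tr_trans: "subgrp_le G L K \<Longrightarrow> subgrp_le G K H \<Longrightarrow> a \<in> carrier (tlev T L) \<Longrightarrow>
   ttr T K H (ttr T L K a) = ttr T L H a"
  using A4 by blast
lemma cj_hom: "g \<in> carrier G \<Longrightarrow> subgroup H G \<Longrightarrow> tcj T g H \<in> ring_hom (tlev T H) (tlev T (conjg G g H))"
  using A5 by blast
lemma cj_tr: "g \<in> carrier G \<Longrightarrow> subgrp_le G K H \<Longrightarrow> a \<in> carrier (tlev T K) \<Longrightarrow>
   tcj T g H (ttr T K H a) = ttr T (conjg G g K) (conjg G g H) (tcj T g K a)"
  using A8 by blast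


context fixes I assumes TI: "tambara_ideal G T I"
begin
lemmas TIU = TI[unfolded tambara_ideal_def]
lemma ti_ideal: "subgroup H G \<Longrightarrow> ideal (I H) (tlev T H)"
  using TIU[THEN conjunct1] by blast
lemma ti_carr: "subgroup H G \<Longrightarrow> I H \<subseteq> carrier (tlev T H)"
  by (meson ideal.Icarr ti_ideal subsetI)
lemmas TI2 = TIU[THEN conjunct2, THEN conjunct1, rule_format]
lemma ti_res: "subgrp_le G K H \<Longrightarrow> a \<in> I H \<Longrightarrow> tres T H K a \<in> I K"
  by (drule TI2) (elim conjE, erule imgD)
lemma ti_tr: "subgrp_le G K H \<Longrightarrow> a \<in> I K \<Longrightarrow> ttr T K H a \<in> I H"
  by (drule TI2) (elim conjE, erule imgD)
lemma ti_nm: "subgrp_le G K H \<Longrightarrow> a \<in> I K \<Longrightarrow> tnm T K H a \<in> I H"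
  by (drule TI2) (elim conjE, erule imgD)
lemma ti_cj: "g \<in> carrier G \<Longrightarrow> subgroup H G \<Longrightarrow> a \<in> I H \<Longrightarrow> tcj T g H a \<in> I (conjg G g H)"
  by (drule TIU[THEN conjunct2, THEN conjunct2, rule_format]) (assumption, erule imgD)
end

lemma ig1[simp]: "g \<in> carrier G \<Longrightarrow> x \<in> carrier G \<Longrightarrow> inv g \<otimes> (g \<otimes> x) = x"
  by (simp add: m_assoc[symmetric])
lemma ig2[simp]: "g \<in> carrier G \<Longrightarrow> x \<in> carrier G \<Longrightarrow> g \<otimes> (inv g \<otimes> x) = x"
  by (simp add: m_assoc[symmetric])

lemma conjg_sub:
  assumes g: "g \<in> carrier G" and H: "subgroup H G"
  shows "subgroup (conjg G g H) G"
proof (rule subgroupI)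
  have Hc: "H \<subseteq> carrier G" using H subgroup.subset by blast
  show "conjg G g H \<subseteq> carrier G" unfolding conjg_def using g Hc by auto
  show "conjg G g H \<noteq> {}" unfolding conjg_def using subgroup.one_closed[OF H] by auto
  fix a b assume a: "a \<in> conjg G g H" and b: "b \<in> conjg G g H"
  then obtain k l where k: "k \<in> H" "a = g \<otimes> k \<otimes> inv g" and l: "l \<in> H" "b = g \<otimes> l \<otimes> inv g"
    unfolding conjg_def by auto
  have kc: "k \<in> carrier G" "l \<in> carrier G" using k l Hc by auto
  have "inv a = g \<otimes> inv k \<otimes> inv g" using k(2) kc g
    by (simp add: inv_mult_group m_assoc)
  then show "inv a \<in> conjg G g H" unfolding conjg_def using subgroup.m_inv_closed[OF H k(1)] by auto
  have "a \<otimes> b = g \<otimes> (k \<otimes> l) \<otimes> inv g" using k(2) l(2) kc g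
    by (simp add: m_assoc)
  then show "a \<otimes> b \<in> conjg G g H" unfolding conjg_def using subgroup.m_closed[OF H k(1) l(1)] by auto
qed

lemma conjg_le: "g \<in> carrier G \<Longrightarrow> subgrp_le G K H \<Longrightarrow> subgrp_le G (conjg G g K) (conjg G g H)"
  unfolding subgrp_le_def using conjg_sub by (auto simp: conjg_def)

lemma conjg_inv:
  assumes g: "g \<in> carrier G" and K: "K \<subseteq> carrier G"
  shows "conjg G g (conjg G (inv g) K) = K"
proof -
  have "g \<otimes> (inv g \<otimes> k \<otimes> inv (inv g)) \<otimes> inv g = k" if "k \<in> carrier G" for k
    using g that by (simp add: m_assoc)
  then have "(\<lambda>k. g \<otimes> (inv g \<otimes> k \<otimes> inv (inv g)) \<otimes> inv g) ` K = id ` K"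
    using K by (intro image_cong) auto
  then show ?thesis unfolding conjg_def image_image by simp
qed

lemma conjg_Int:
  assumes g: "g \<in> carrier G" and A: "A \<subseteq> carrier G" and B: "B \<subseteq> carrier G"
  shows "conjg G g (A \<inter> B) = conjg G g A \<inter> conjg G g B"
proof -
  have "inj_on (\<lambda>k. g \<otimes> k \<otimes> inv g) (carrier G)"
    by (rule inj_onI) (use g in auto)
  then show ?thesis unfolding conjg_def using A B by (simp add: inj_on_image_Int)
qed

lemma sle_sub1: "subgrp_le G K H \<Longrightarrow> subgroup K G" unfolding subgrp_le_def by blast
lemma sle_sub2: "subgrp_le G K H \<Longrightarrow> subgroup H G" unfolding subgrp_le_def by blast
lemma sle_refl: "subgroup H G \<Longrightarrow> subgrp_le G H H" unfolding subgrp_le_def by blast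
lemma sle_trans: "subgrp_le G L K \<Longrightarrow> subgrp_le G K H \<Longrightarrow> subgrp_le G L H" unfolding subgrp_le_def by blast


lemma rcos_mem: "k \<in> K \<Longrightarrow> k \<otimes> g \<in> r_coset G K g"
  unfolding r_coset_def by auto
lemma rcos_elim: "z \<in> r_coset G K g \<Longrightarrow> \<exists>k\<in>K. z = k \<otimes> g"
  unfolding r_coset_def by auto
lemma smult_mem: "a \<in> A \<Longrightarrow> b \<in> B \<Longrightarrow> a \<otimes> b \<in> set_mult G A B"
  unfolding set_mult_def by auto
lemma smult_elim: "z \<in> set_mult G A B \<Longrightarrow> \<exists>a\<in>A. \<exists>b\<in>B. z = a \<otimes> b"
  unfolding set_mult_def by auto

lemma dcos_rep:
  assumes H: "subgroup H G" and K: "subgroup K G" and L: "subgroup L G" and KH: "K \<subseteq> H" and LH: "L \<subseteq> H"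
    and D: "D \<in> dcos G H K L"
  shows "(SOME g. g \<in> D) \<in> H"
proof -
  have "\<exists>g0. D = set_mult G (r_coset G K g0) L \<and> g0 \<in> H"
    using D unfolding dcos_def mem_Collect_eq .
  then obtain g0 where Dg: "D = set_mult G (r_coset G K g0) L" and g0: "g0 \<in> H"
    by (elim exE conjE)
  have g0c: "g0 \<in> carrier G" by (rule subgroup.mem_carrier[OF H g0])
  have "(\<one> \<otimes> g0) \<otimes> \<one> \<in> D" unfolding Dg
    by (rule smult_mem[OF rcos_mem[OF subgroup.one_closed[OF K]] subgroup.one_closed[OF L]])
  then have "g0 \<in> D" using g0c by simp
  then have "(SOME g. g \<in> D) \<in> D" by (rule someI)
  then have "\<exists>a\<in>r_coset G K g0. \<exists>l\<in>L. (SOME g. g \<in> D) = a \<otimes> l"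
    unfolding Dg by (rule smult_elim)
  then obtain a l where a: "a \<in> r_coset G K g0" and l: "l \<in> L" and e2: "(SOME g. g \<in> D) = a \<otimes> l"
    by (elim bexE)
  obtain k where k: "k \<in> K" and e3: "a = k \<otimes> g0" using rcos_elim[OF a] by (elim bexE)
  have kH: "k \<in> H" using k KH by blast
  have lH: "l \<in> H" using l LH by blast
  have "a \<in> H" unfolding e3 by (rule subgroup.m_closed[OF H kH g0])
  then show ?thesis unfolding e2 by (rule subgroup.m_closed[OF H _ lH])
qed

subsection \<open>Cosets and sections\<close>

lemma lcos_elem: "y \<in> l_coset G x Q \<Longrightarrow> \<exists>q\<in>Q. y = x \<otimes> q"
  unfolding l_coset_def by auto
lemma lcos_memI: "q \<in> Q \<Longrightarrow> x \<otimes> q \<in> l_coset G x Q"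
  unfolding l_coset_def by auto

lemma lcos_lcos:
  assumes H: "subgroup H G" and Q: "subgroup Q G" and h: "h \<in> H" and x: "x \<in> lcos G H Q"
  shows "l_coset G h x \<in> lcos G H Q"
proof -
  obtain h0 where h0: "h0 \<in> H" and xe: "x = l_coset G h0 Q" using x unfolding lcos_def by blast
  have "l_coset G h x = l_coset G (h \<otimes> h0) Q" unfolding xe
    by (rule lcos_m_assoc[OF subgroup.subset[OF Q] subgroup.mem_carrier[OF H h] subgroup.mem_carrier[OF H h0]])
  moreover have "h \<otimes> h0 \<in> H" by (rule subgroup.m_closed[OF H h h0])
  ultimately show ?thesis unfolding lcos_def by blast
qed

lemma lcos_carr:
  assumes H: "subgroup H G" and Q: "subgroup Q G" and x: "x \<in> lcos G H Q"
  shows "x \<subseteq> carrier G"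
proof -
  obtain h0 where h0: "h0 \<in> H" and xe: "x = l_coset G h0 Q" using x unfolding lcos_def by blast
  show ?thesis unfolding xe by (rule l_coset_subset_G[OF subgroup.subset[OF Q] subgroup.mem_carrier[OF H h0]])
qed

lemma lcos_finite: "subgroup H G \<Longrightarrow> finite (lcos G H Q)"
proof -
  assume H: "subgroup H G"
  have "finite H" using finG subgroup.subset[OF H] finite_subset by blast
  moreover have "lcos G H Q = (\<lambda>h. l_coset G h Q) ` H" unfolding lcos_def by blast
  ultimately show ?thesis by simp
qed

lemma lcos_self: "subgroup H G \<Longrightarrow> subgroup Q G \<Longrightarrow> Q \<in> lcos G H Q"
proof -
  assume H: "subgroup H G" and Q: "subgroup Q G"
  have "l_coset G \<one> Q = Q" by (rule lcos_mult_one[OF subgroup.subset[OF Q]])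
  then show ?thesis unfolding lcos_def using subgroup.one_closed[OF H] by force
qed

lemma lcos_rep:
  assumes H: "subgroup H G" and Q: "subgroup Q G" and QH: "Q \<subseteq> H" and x: "x \<in> lcos G H Q" and y: "y \<in> x"
  shows "y \<in> H" "x = l_coset G y Q"
proof -
  obtain h0 where h0: "h0 \<in> H" and xe: "x = l_coset G h0 Q" using x unfolding lcos_def by blast
  obtain q where q: "q \<in> Q" and ye: "y = h0 \<otimes> q" using lcos_elem y xe by blast
  show "y \<in> H" unfolding ye using q QH by (intro subgroup.m_closed[OF H h0]) auto
  show "x = l_coset G y Q" unfolding xe
    by (rule l_repr_independence[OF _ subgroup.mem_carrier[OF H h0] Q]) (use y xe in simp)
qed

lemma lcos_some:
  assumes H: "subgroup H G" and Q: "subgroup Q G" and QH: "Q \<subseteq> H" and x: "x \<in> lcos G H Q"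
  shows "(SOME y. y \<in> x) \<in> H" "x = l_coset G (SOME y. y \<in> x) Q" "(SOME y. y \<in> x) \<in> x"
proof -
  obtain h0 where h0: "h0 \<in> H" and xe: "x = l_coset G h0 Q" using x unfolding lcos_def by blast
  have "h0 \<otimes> \<one> \<in> x" unfolding xe by (rule lcos_memI[OF subgroup.one_closed[OF Q]])
  then have "\<exists>y. y \<in> x" by blast
  then show y: "(SOME y. y \<in> x) \<in> x" by (rule someI_ex)
  show "(SOME y. y \<in> x) \<in> H" by (rule lcos_rep(1)[OF H Q QH x y])
  show "x = l_coset G (SOME y. y \<in> x) Q" by (rule lcos_rep(2)[OF H Q QH x y])
qed

lemma lcos_inv1: "h \<in> carrier G \<Longrightarrow> x \<subseteq> carrier G \<Longrightarrow> l_coset G h (l_coset G (inv h) x) = x"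
  by (simp add: lcos_m_assoc lcos_mult_one)
lemma lcos_inv2: "h \<in> carrier G \<Longrightarrow> x \<subseteq> carrier G \<Longrightarrow> l_coset G (inv h) (l_coset G h x) = x"
  by (simp add: lcos_m_assoc lcos_mult_one)

context
  fixes H K and n :: nat and L assumes KH: "subgrp_le G K H" and Ls: "\<And>i. i < n \<Longrightarrow> subgrp_le G (L i) K"
begin

lemma HH: "subgroup H G" using KH unfolding subgrp_le_def by blast
lemma KK: "subgroup K G" using KH unfolding subgrp_le_def by blast
lemma KsH: "K \<subseteq> H" using KH unfolding subgrp_le_def by blast
lemma LL: "i < n \<Longrightarrow> subgroup (L i) G" using Ls unfolding subgrp_le_def by blast
lemma LsH: "i < n \<Longrightarrow> L i \<subseteq> H" using Ls KsH unfolding subgrp_le_def by blast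
lemma LsK: "i < n \<Longrightarrow> L i \<subseteq> K" using Ls unfolding subgrp_le_def by blast

lemma sec_val:
  assumes s: "s \<in> esections G H K n L" and x: "x \<in> lcos G H K"
  shows "fst (s x) < n" "snd (s x) \<in> lcos G H (L (fst (s x)))" "set_mult G (snd (s x)) K = x"
proof -
  have "s x \<in> efib G H K n L x" using s x unfolding esections_def PiE_iff by blast
  then obtain i C where e: "s x = (i, C)" and c: "i < n" "C \<in> lcos G H (L i)" "set_mult G C K = x"
    unfolding efib_def by blast
  show "fst (s x) < n" "snd (s x) \<in> lcos G H (L (fst (s x)))" "set_mult G (snd (s x)) K = x"
    using e c by auto
qed

lemma sec_ext: "s \<in> esections G H K n L \<Longrightarrow> s \<in> extensional (lcos G H K)"
  unfolding esections_def PiE_iff by blast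

lemma esact_sec:
  assumes h: "h \<in> H" and s: "s \<in> esections G H K n L"
  shows "esact G H K h s \<in> esections G H K n L"
  unfolding esections_def PiE_iff
proof (intro conjI ballI)
  show "esact G H K h s \<in> extensional (lcos G H K)" unfolding esact_def by simp
  fix x assume x: "x \<in> lcos G H K"
  have hc: "h \<in> carrier G" by (rule subgroup.mem_carrier[OF HH h])
  have ih: "inv h \<in> H" by (rule subgroup.m_inv_closed[OF HH h])
  have y: "l_coset G (inv h) x \<in> lcos G H K" by (rule lcos_lcos[OF HH KK ih x])
  define i where "i = fst (s (l_coset G (inv h) x))"
  define C where "C = snd (s (l_coset G (inv h) x))"
  have i: "i < n" unfolding i_def by (rule sec_val(1)[OF s y])
  have C: "C \<in> lcos G H (L i)" unfolding C_def i_def by (rule sec_val(2)[OF s y])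
  have CK: "set_mult G C K = l_coset G (inv h) x" unfolding C_def by (rule sec_val(3)[OF s y])
  have Cc: "C \<subseteq> carrier G" by (rule lcos_carr[OF HH LL[OF i] C])
  have xc: "x \<subseteq> carrier G" by (rule lcos_carr[OF HH KK x])
  have e: "esact G H K h s x = (i, l_coset G h C)" unfolding esact_def i_def C_def using x by simp
  have "set_mult G (l_coset G h C) K = l_coset G h (set_mult G C K)"
    by (rule setmult_lcos_assoc[OF Cc subgroup.subset[OF KK] hc])
  also have "\<dots> = x" unfolding CK by (rule lcos_inv1[OF hc xc])
  finally have "set_mult G (l_coset G h C) K = x" .
  moreover have "l_coset G h C \<in> lcos G H (L i)" by (rule lcos_lcos[OF HH LL[OF i] h C])
  ultimately show "esact G H K h s x \<in> efib G H K n L x" unfolding e efib_def using i by blast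
qed

lemma esact_one:
  assumes s: "s \<in> esections G H K n L"
  shows "esact G H K \<one> s = s"
proof -
  have "esact G H K \<one> s = restrict s (lcos G H K)"
    unfolding esact_def
  proof (rule restrict_ext)
    fix x assume x: "x \<in> lcos G H K"
    have xc: "x \<subseteq> carrier G" by (rule lcos_carr[OF HH KK x])
    have e1: "l_coset G (inv \<one>) x = x" using xc by (simp add: lcos_mult_one)
    have i: "fst (s x) < n" by (rule sec_val(1)[OF s x])
    have C: "snd (s x) \<in> lcos G H (L (fst (s x)))" by (rule sec_val(2)[OF s x])
    have Cc: "snd (s x) \<subseteq> carrier G" by (rule lcos_carr[OF HH LL[OF i] C])
    show "(fst (s (l_coset G (inv \<one>) x)), l_coset G \<one> (snd (s (l_coset G (inv \<one>) x)))) = s x"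
      unfolding e1 using Cc by (simp add: lcos_mult_one)
  qed
  also have "\<dots> = s" by (rule extensional_restrict[OF sec_ext[OF s]])
  finally show ?thesis .
qed

lemma esact_mult:
  assumes a: "a \<in> H" and b: "b \<in> H" and s: "s \<in> esections G H K n L"
  shows "esact G H K (a \<otimes> b) s = esact G H K a (esact G H K b s)"
proof (rule ext)
  fix x
  show "esact G H K (a \<otimes> b) s x = esact G H K a (esact G H K b s) x"
  proof (cases "x \<in> lcos G H K")
    case False then show ?thesis unfolding esact_def by simp
  next
    case x: True
    have ac: "a \<in> carrier G" by (rule subgroup.mem_carrier[OF HH a])
    have bc: "b \<in> carrier G" by (rule subgroup.mem_carrier[OF HH b])
    have xc: "x \<subseteq> carrier G" by (rule lcos_carr[OF HH KK x])
    have ia: "inv a \<in> H" by (rule subgroup.m_inv_closed[OF HH a])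
    have y: "l_coset G (inv a) x \<in> lcos G H K" by (rule lcos_lcos[OF HH KK ia x])
    have e1: "l_coset G (inv b) (l_coset G (inv a) x) = l_coset G (inv (a \<otimes> b)) x"
      using ac bc xc by (simp add: lcos_m_assoc inv_mult_group)
    define z where "z = l_coset G (inv (a \<otimes> b)) x"
    have z: "z \<in> lcos G H K" unfolding z_def
      by (rule lcos_lcos[OF HH KK subgroup.m_inv_closed[OF HH subgroup.m_closed[OF HH a b]] x])
    have i: "fst (s z) < n" by (rule sec_val(1)[OF s z])
    have C: "snd (s z) \<in> lcos G H (L (fst (s z)))" by (rule sec_val(2)[OF s z])
    have Cc: "snd (s z) \<subseteq> carrier G" by (rule lcos_carr[OF HH LL[OF i] C])
    have "esact G H K a (esact G H K b s) x =
       (fst (s z), l_coset G a (l_coset G b (snd (s z))))"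
      unfolding esact_def using x y e1 z_def by simp
    also have "\<dots> = esact G H K (a \<otimes> b) s x"
      unfolding esact_def using x z_def Cc ac bc by (simp add: lcos_m_assoc)
    finally show ?thesis by simp
  qed
qed

lemma estab_sub:
  assumes s: "s \<in> esections G H K n L"
  shows "subgrp_le G (estab G H K s) H"
proof -
  have sub: "subgroup (estab G H K s) G"
  proof (rule subgroupI)
    show "estab G H K s \<subseteq> carrier G" unfolding estab_def using subgroup.subset[OF HH] by auto
    show "estab G H K s \<noteq> {}" unfolding estab_def using esact_one[OF s] subgroup.one_closed[OF HH] by auto
  next
    fix a assume "a \<in> estab G H K s"
    then have a: "a \<in> H" and as: "esact G H K a s = s" unfolding estab_def by auto
    have ia: "inv a \<in> H" by (rule subgroup.m_inv_closed[OF HH a])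
    have ac: "a \<in> carrier G" by (rule subgroup.mem_carrier[OF HH a])
    have "esact G H K (inv a) s = esact G H K (inv a) (esact G H K a s)" using as by simp
    also have "\<dots> = esact G H K (inv a \<otimes> a) s" by (rule esact_mult[OF ia a s, symmetric])
    also have "\<dots> = s" using ac esact_one[OF s] by simp
    finally show "inv a \<in> estab G H K s" unfolding estab_def using ia by auto
  next
    fix a b assume "a \<in> estab G H K s" "b \<in> estab G H K s"
    then have a: "a \<in> H" and as: "esact G H K a s = s" and b: "b \<in> H" and bs: "esact G H K b s = s"
      unfolding estab_def by auto
    have "esact G H K (a \<otimes> b) s = s" using esact_mult[OF a b s] as bs by simp
    then show "a \<otimes> b \<in> estab G H K s" unfolding estab_def using subgroup.m_closed[OF HH a b] by auto
  qed
  show ?thesis unfolding subgrp_le_def using sub HH unfolding estab_def by auto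
qed

lemma eorb_some:
  assumes Ob: "Ob \<in> eorbits G H K n L"
  shows "(SOME s. s \<in> Ob) \<in> esections G H K n L"
proof -
  obtain s0 where s0: "s0 \<in> esections G H K n L" and Obe: "Ob = {esact G H K h s0 | h. h \<in> H}"
    using Ob unfolding eorbits_def by blast
  have "esact G H K \<one> s0 \<in> Ob" unfolding Obe using subgroup.one_closed[OF HH] by blast
  then have "\<exists>s. s \<in> Ob" by blast
  then have "(SOME s. s \<in> Ob) \<in> Ob" by (rule someI_ex)
  then obtain h where h: "h \<in> H" and e: "(SOME s. s \<in> Ob) = esact G H K h s0" unfolding Obe by blast
  show ?thesis unfolding e by (rule esact_sec[OF h s0])
qed

lemma orb_data:
  assumes s: "s \<in> esections G H K n L"
    and Ob: "Ob \<in> {{l_coset G h x | h. h \<in> estab G H K s} | x. x \<in> lcos G H K}"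
  defines "x \<equiv> SOME x. x \<in> Ob"
  defines "h \<equiv> SOME h. h \<in> x"
  defines "i \<equiv> fst (s x)"
  defines "h' \<equiv> SOME h'. h' \<in> snd (s x)"
  defines "Sx \<equiv> estab G H K s \<inter> conjg G h K"
  shows "i < n" "h' \<in> carrier G" "subgrp_le G Sx (estab G H K s)" "subgrp_le G Sx (conjg G h' (L i))"
proof -
  let ?S = "estab G H K s"
  have SH: "subgrp_le G ?S H" by (rule estab_sub[OF s])
  have Sg: "subgroup ?S G" using SH unfolding subgrp_le_def by blast
  have SsH: "?S \<subseteq> H" using SH unfolding subgrp_le_def by blast
  obtain x0 where x0: "x0 \<in> lcos G H K" and Obe: "Ob = {l_coset G h1 x0 | h1. h1 \<in> ?S}"
    using Ob by blast
  have "l_coset G \<one> x0 \<in> Ob" unfolding Obe using subgroup.one_closed[OF Sg] by blast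
  then have "\<exists>y. y \<in> Ob" by blast
  then have "x \<in> Ob" unfolding x_def by (rule someI_ex)
  then obtain h1 where h1: "h1 \<in> ?S" and xe: "x = l_coset G h1 x0" unfolding Obe by blast
  have x: "x \<in> lcos G H K" unfolding xe using h1 SsH by (intro lcos_lcos[OF HH KK _ x0]) auto
  have hH: "h \<in> H" and xh: "x = l_coset G h K" unfolding h_def using lcos_some[OF HH KK KsH x] by auto
  have hc: "h \<in> carrier G" by (rule subgroup.mem_carrier[OF HH hH])
  show i: "i < n" unfolding i_def by (rule sec_val(1)[OF s x])
  define C where "C = snd (s x)"
  have C: "C \<in> lcos G H (L i)" unfolding C_def i_def by (rule sec_val(2)[OF s x])
  have h'H: "h' \<in> H" and Ch: "C = l_coset G h' (L i)" and h'C: "h' \<in> C"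
    unfolding h'_def C_def[symmetric] using lcos_some[OF HH LL[OF i] LsH[OF i] C] by auto
  show h'c: "h' \<in> carrier G" by (rule subgroup.mem_carrier[OF HH h'H])
  have cK: "subgroup (conjg G h K) G" by (rule conjg_sub[OF hc KK])
  have Sxg: "subgroup Sx G" unfolding Sx_def by (rule subgroups_Inter_pair[OF Sg cK])
  show "subgrp_le G Sx ?S" unfolding subgrp_le_def Sx_def using Sxg Sg by (auto simp: Sx_def)
  have cL: "subgroup (conjg G h' (L i)) G" by (rule conjg_sub[OF h'c LL[OF i]])
  have "Sx \<subseteq> conjg G h' (L i)"
  proof
    fix \<sigma> assume "\<sigma> \<in> Sx"
    then have sS: "\<sigma> \<in> ?S" and sK: "\<sigma> \<in> conjg G h K" unfolding Sx_def by auto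
    have sH: "\<sigma> \<in> H" and sfix: "esact G H K \<sigma> s = s" using sS unfolding estab_def by auto
    have sc: "\<sigma> \<in> carrier G" by (rule subgroup.mem_carrier[OF HH sH])
    obtain k where k: "k \<in> K" and se: "\<sigma> = h \<otimes> k \<otimes> inv h" using sK unfolding conjg_def by blast
    have kc: "k \<in> carrier G" by (rule subgroup.mem_carrier[OF KK k])
    have ik: "inv k \<in> K" by (rule subgroup.m_inv_closed[OF KK k])
    have e1: "inv \<sigma> \<otimes> h = h \<otimes> inv k" unfolding se using hc kc by (simp add: m_assoc inv_mult_group)
    have "h \<otimes> inv k \<in> l_coset G h K" by (rule lcos_memI[OF ik])
    then have e2: "l_coset G h K = l_coset G (h \<otimes> inv k) K" by (rule l_repr_independence[OF _ hc KK])
    have "l_coset G (inv \<sigma>) x = l_coset G (inv \<sigma> \<otimes> h) K"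
      unfolding xh by (rule lcos_m_assoc[OF subgroup.subset[OF KK] inv_closed[OF sc] hc])
    also have "\<dots> = x" unfolding e1 e2[symmetric] xh ..
    finally have ix: "l_coset G (inv \<sigma>) x = x" .
    have "esact G H K \<sigma> s x = (fst (s x), l_coset G \<sigma> C)"
      unfolding esact_def C_def using x ix by simp
    then have "l_coset G \<sigma> C = C" using sfix unfolding C_def by (metis snd_conv)
    moreover have "\<sigma> \<otimes> h' \<in> l_coset G \<sigma> C" unfolding l_coset_def using h'C by blast
    ultimately have "\<sigma> \<otimes> h' \<in> l_coset G h' (L i)" using Ch by simp
    then obtain l where l: "l \<in> L i" and le: "\<sigma> \<otimes> h' = h' \<otimes> l" using lcos_elem by blast
    have lc: "l \<in> carrier G" by (rule subgroup.mem_carrier[OF LL[OF i] l])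
    have "\<sigma> = (\<sigma> \<otimes> h') \<otimes> inv h'" using sc h'c by (simp add: m_assoc)
    also have "\<dots> = h' \<otimes> l \<otimes> inv h'" unfolding le ..
    finally show "\<sigma> \<in> conjg G h' (L i)" unfolding conjg_def using l by blast
  qed
  then show "subgrp_le G Sx (conjg G h' (L i))" unfolding subgrp_le_def using Sxg cL by blast
qed

end

lemma tr_finsum:
  assumes KH: "subgrp_le G K H"
  shows "f \<in> A \<rightarrow> carrier (tlev T K) \<Longrightarrow>
    ttr T K H (finsum (tlev T K) f A) = finsum (tlev T H) (ttr T K H \<circ> f) A"
  by (rule add_hom_finsum[OF rg[OF sle_sub1[OF KH]] rg[OF sle_sub2[OF KH]]])
     (use tr_carr[OF KH] tr_add[OF KH] in \<open>auto simp: Pi_def\<close>)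

lemma res_finsum:
  assumes KH: "subgrp_le G K H"
  shows "f \<in> A \<rightarrow> carrier (tlev T H) \<Longrightarrow>
    tres T H K (finsum (tlev T H) f A) = finsum (tlev T K) (tres T H K \<circ> f) A"
  by (rule ring_hom_finsum'[OF rg[OF sle_sub2[OF KH]] rg[OF sle_sub1[OF KH]] res_hom[OF KH]])

lemma cj_finsum:
  assumes g: "g \<in> carrier G" and H: "subgroup H G"
  shows "f \<in> A \<rightarrow> carrier (tlev T H) \<Longrightarrow>
    tcj T g H (finsum (tlev T H) f A) = finsum (tlev T (conjg G g H)) (tcj T g H \<circ> f) A"
  by (rule ring_hom_finsum'[OF rg[OF H] rg[OF conjg_sub[OF g H]] cj_hom[OF g H]])

lemma cj_carr: "g \<in> carrier G \<Longrightarrow> subgroup H G \<Longrightarrow> a \<in> carrier (tlev T H) \<Longrightarrow>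
   tcj T g H a \<in> carrier (tlev T (conjg G g H))"
  by (rule ring_hom_closed[OF cj_hom])

lemma cj_mult: "g \<in> carrier G \<Longrightarrow> subgroup H G \<Longrightarrow> a \<in> carrier (tlev T H) \<Longrightarrow> b \<in> carrier (tlev T H) \<Longrightarrow>
   tcj T g H (a \<otimes>\<^bsub>tlev T H\<^esub> b) = tcj T g H a \<otimes>\<^bsub>tlev T (conjg G g H)\<^esub> tcj T g H b"
  by (rule ring_hom_mult[OF cj_hom])

lemma res_mult: "subgrp_le G K H \<Longrightarrow> a \<in> carrier (tlev T H) \<Longrightarrow> b \<in> carrier (tlev T H) \<Longrightarrow>
   tres T H K (a \<otimes>\<^bsub>tlev T H\<^esub> b) = tres T H K a \<otimes>\<^bsub>tlev T K\<^esub> tres T H K b"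
  by (rule ring_hom_mult[OF res_hom])

lemma fs_closed: "subgroup H G \<Longrightarrow> f \<in> A \<rightarrow> carrier (tlev T H) \<Longrightarrow> finsum (tlev T H) f A \<in> carrier (tlev T H)"
proof -
  assume H: "subgroup H G" "f \<in> A \<rightarrow> carrier (tlev T H)"
  interpret R: ring "tlev T H" by (rule rg[OF H(1)])
  show ?thesis using H(2) by (rule R.finsum_closed)
qed

lemma fs_cong: "subgroup H G \<Longrightarrow> A = B \<Longrightarrow> g \<in> B \<rightarrow> carrier (tlev T H) \<Longrightarrow> (\<And>i. i \<in> B \<Longrightarrow> f i = g i) \<Longrightarrow>
   finsum (tlev T H) f A = finsum (tlev T H) g B"
proof -
  assume H: "subgroup H G" "A = B" "g \<in> B \<rightarrow> carrier (tlev T H)" "\<And>i. i \<in> B \<Longrightarrow> f i = g i"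
  interpret R: ring "tlev T H" by (rule rg[OF H(1)])
  show ?thesis using H(2-4) by (rule R.finsum_cong')
qed

subsection \<open>Generated ideals\<close>

lemma ti_top: "tambara_ideal G T (\<lambda>H. carrier (tlev T H))"
  unfolding tambara_ideal_def
proof (intro conjI allI impI ballI subsetI)
  fix H assume "subgroup H G" then show "ideal (carrier (tlev T H)) (tlev T H)"
    using rg ring.oneideal by blast
next
  fix H K r assume KH: "subgrp_le G K H" and "r \<in> tres T H K ` carrier (tlev T H)"
  then show "r \<in> carrier (tlev T K)" using res_carr[OF KH] by auto
next
  fix H K r assume KH: "subgrp_le G K H" and "r \<in> ttr T K H ` carrier (tlev T K)"
  then show "r \<in> carrier (tlev T H)" using tr_carr[OF KH] by auto
next
  fix H K r assume KH: "subgrp_le G K H" and "r \<in> tnm T K H ` carrier (tlev T K)"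
  then show "r \<in> carrier (tlev T H)" using nm_carr[OF KH] by auto
next
  fix g H r assume g: "g \<in> carrier G" and H: "subgroup H G" and "r \<in> tcj T g H ` carrier (tlev T H)"
  then show "r \<in> carrier (tlev T (conjg G g H))" using cj_carr[OF g H] by auto
qed

lemma tgen_ti:
  assumes X: "\<And>H. subgroup H G \<Longrightarrow> Xs H \<subseteq> carrier (tlev T H)"
  shows "tambara_ideal G T (tgen G T Xs)"
proof -
  let ?F = "{J. tambara_ideal G T J \<and> tideal_le G Xs J}"
  have top: "(\<lambda>H. carrier (tlev T H)) \<in> ?F" using ti_top X unfolding tideal_le_def by auto
  have eq: "tgen G T Xs H = \<Inter> ((\<lambda>J. J H) ` ?F)" for H
    unfolding tgen_def by auto
  have idl: "ideal (tgen G T Xs H) (tlev T H)" if H: "subgroup H G" for H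
    unfolding eq
  proof (rule ring.i_Intersect[OF rg[OF H]])
    show "(\<lambda>J. J H) ` ?F \<noteq> {}" using top by blast
    fix I assume "I \<in> (\<lambda>J. J H) ` ?F"
    then obtain J where "J \<in> ?F" "I = J H" by blast
    then show "ideal I (tlev T H)" using ti_ideal[OF _ H] by blast
  qed
  show ?thesis unfolding tambara_ideal_def
  proof (intro conjI allI impI ballI subsetI)
    fix H assume "subgroup H G" then show "ideal (tgen G T Xs H) (tlev T H)" by (rule idl)
  next
    fix H K r assume KH: "subgrp_le G K H" and "r \<in> tres T H K ` tgen G T Xs H"
    then obtain a where a: "a \<in> tgen G T Xs H" "r = tres T H K a" by auto
    show "r \<in> tgen G T Xs K" using a ti_res[OF _ KH] unfolding tgen_def by auto
  next
    fix H K r assume KH: "subgrp_le G K H" and "r \<in> ttr T K H ` tgen G T Xs K"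
    then obtain a where a: "a \<in> tgen G T Xs K" "r = ttr T K H a" by auto
    show "r \<in> tgen G T Xs H" using a ti_tr[OF _ KH] unfolding tgen_def by auto
  next
    fix H K r assume KH: "subgrp_le G K H" and "r \<in> tnm T K H ` tgen G T Xs K"
    then obtain a where a: "a \<in> tgen G T Xs K" "r = tnm T K H a" by auto
    show "r \<in> tgen G T Xs H" using a ti_nm[OF _ KH] unfolding tgen_def by auto
  next
    fix g H r assume g: "g \<in> carrier G" and H: "subgroup H G" and "r \<in> tcj T g H ` tgen G T Xs H"
    then obtain a where a: "a \<in> tgen G T Xs H" "r = tcj T g H a" by auto
    show "r \<in> tgen G T Xs (conjg G g H)" using a ti_cj[OF _ g H] unfolding tgen_def by auto
  qed
qed

lemma tgen_sup: "tideal_le G Xs (tgen G T Xs)"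
  unfolding tideal_le_def tgen_def by blast

lemma tgen_min: "tambara_ideal G T W \<Longrightarrow> tideal_le G Xs W \<Longrightarrow> tideal_le G (tgen G T Xs) W"
  unfolding tideal_le_def tgen_def by blast


subsection \<open>The explicit description of the product\<close>

context fixes XX YY assumes TX: "tambara_ideal G T XX" and TY: "tambara_ideal G T YY"
begin

lemma prod_carr: "subgroup L G \<Longrightarrow> x \<in> XX L \<Longrightarrow> y \<in> YY L \<Longrightarrow> x \<otimes>\<^bsub>tlev T L\<^esub> y \<in> carrier (tlev T L)"
  by (meson TX TY ring.ring_simprules(5) rg subsetD ti_carr)

lemma term_carr: "subgrp_le G L H \<Longrightarrow> x \<in> XX L \<Longrightarrow> y \<in> YY L \<Longrightarrow>
   ttr T L H (x \<otimes>\<^bsub>tlev T L\<^esub> y) \<in> carrier (tlev T H)"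
  by (meson prod_carr sle_sub1 tr_carr)

lemma VV_elim:
  assumes "v \<in> VV G T XX YY H"
  obtains L xs ys n where "v = finsum (tlev T H) (\<lambda>i. ttr T (L i) H (xs i \<otimes>\<^bsub>tlev T (L i)\<^esub> ys i)) {..<(n::nat)}"
    "\<And>i. i < n \<Longrightarrow> subgrp_le G (L i) H" "\<And>i. i < n \<Longrightarrow> xs i \<in> XX (L i)" "\<And>i. i < n \<Longrightarrow> ys i \<in> YY (L i)"
proof -
  from assms[unfolded VV_def mem_Collect_eq] show thesis
    apply (elim exE conjE)
    apply (rule that)
    apply assumption
    by auto
qed

lemma VV_carr:
  assumes H: "subgroup H G" shows "VV G T XX YY H \<subseteq> carrier (tlev T H)"
proof
  fix v assume "v \<in> VV G T XX YY H"
  then obtain L xs ys n where v: "v = finsum (tlev T H) (\<lambda>i. ttr T (L i) H (xs i \<otimes>\<^bsub>tlev T (L i)\<^esub> ys i)) {..<(n::nat)}"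
    and c: "\<And>i. i < n \<Longrightarrow> subgrp_le G (L i) H" "\<And>i. i < n \<Longrightarrow> xs i \<in> XX (L i)" "\<And>i. i < n \<Longrightarrow> ys i \<in> YY (L i)"
    by (rule VV_elim) blast
  show "v \<in> carrier (tlev T H)" unfolding v
    by (rule fs_closed[OF H]) (use c term_carr in auto)
qed

lemma VV_intro:
  assumes "\<And>i. i < n \<Longrightarrow> subgrp_le G (L i) H \<and> xs i \<in> XX (L i) \<and> ys i \<in> YY (L i)"
  shows "finsum (tlev T H) (\<lambda>i. ttr T (L i) H (xs i \<otimes>\<^bsub>tlev T (L i)\<^esub> ys i)) {..<(n::nat)} \<in> VV G T XX YY H"
  unfolding VV_def mem_Collect_eq
  apply (rule exI[of _ n], rule exI[of _ L], rule exI[of _ xs], rule exI[of _ ys])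
  using assms by auto

lemma VV_zero:
  assumes H: "subgroup H G" shows "\<zero>\<^bsub>tlev T H\<^esub> \<in> VV G T XX YY H"
proof -
  interpret R: ring "tlev T H" by (rule rg[OF H])
  have "finsum (tlev T H) (\<lambda>i. ttr T ((\<lambda>_. H) i) H ((\<lambda>_. \<zero>\<^bsub>tlev T H\<^esub>) i \<otimes>\<^bsub>tlev T ((\<lambda>_. H) i)\<^esub> (\<lambda>_. \<zero>\<^bsub>tlev T H\<^esub>) i)) {..<(0::nat)} \<in> VV G T XX YY H"
    by (rule VV_intro) auto
  then show ?thesis by simp
qed

lemma VV_single:
  assumes LH: "subgrp_le G L H" and x: "x \<in> XX L" and y: "y \<in> YY L"
  shows "ttr T L H (x \<otimes>\<^bsub>tlev T L\<^esub> y) \<in> VV G T XX YY H"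
proof -
  have "finsum (tlev T H) (\<lambda>i. ttr T ((\<lambda>_. L) i) H ((\<lambda>_. x) i \<otimes>\<^bsub>tlev T ((\<lambda>_. L) i)\<^esub> (\<lambda>_. y) i)) {..<Suc 0} \<in> VV G T XX YY H"
    by (rule VV_intro) (use LH x y in auto)
  moreover have "finsum (tlev T H) (\<lambda>i. ttr T ((\<lambda>_. L) i) H ((\<lambda>_. x) i \<otimes>\<^bsub>tlev T ((\<lambda>_. L) i)\<^esub> (\<lambda>_. y) i)) {..<Suc 0}
     = ttr T L H (x \<otimes>\<^bsub>tlev T L\<^esub> y)"
    using ring.finsum_one_elem[OF rg[OF sle_sub2[OF LH]]] term_carr[OF LH x y] by simp
  ultimately show ?thesis by simp
qed

lemma VV_add:
  assumes H: "subgroup H G" and a: "a \<in> VV G T XX YY H" and b: "b \<in> VV G T XX YY H"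
  shows "a \<oplus>\<^bsub>tlev T H\<^esub> b \<in> VV G T XX YY H"
proof -
  obtain L1 xs1 ys1 n1 where a': "a = finsum (tlev T H) (\<lambda>i. ttr T (L1 i) H (xs1 i \<otimes>\<^bsub>tlev T (L1 i)\<^esub> ys1 i)) {..<(n1::nat)}"
    and c1: "\<And>i. i < n1 \<Longrightarrow> subgrp_le G (L1 i) H" "\<And>i. i < n1 \<Longrightarrow> xs1 i \<in> XX (L1 i)" "\<And>i. i < n1 \<Longrightarrow> ys1 i \<in> YY (L1 i)"
    using a by (rule VV_elim) blast
  obtain L2 xs2 ys2 n2 where b': "b = finsum (tlev T H) (\<lambda>i. ttr T (L2 i) H (xs2 i \<otimes>\<^bsub>tlev T (L2 i)\<^esub> ys2 i)) {..<(n2::nat)}"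
    and c2: "\<And>i. i < n2 \<Longrightarrow> subgrp_le G (L2 i) H" "\<And>i. i < n2 \<Longrightarrow> xs2 i \<in> XX (L2 i)" "\<And>i. i < n2 \<Longrightarrow> ys2 i \<in> YY (L2 i)"
    using b by (rule VV_elim) blast
  define L where "L i = (if i < n1 then L1 i else L2 (i - n1))" for i
  define xs where "xs i = (if i < n1 then xs1 i else xs2 (i - n1))" for i
  define ys where "ys i = (if i < n1 then ys1 i else ys2 (i - n1))" for i
  define f where "f i = ttr T (L i) H (xs i \<otimes>\<^bsub>tlev T (L i)\<^esub> ys i)" for i
  have c: "subgrp_le G (L i) H \<and> xs i \<in> XX (L i) \<and> ys i \<in> YY (L i)" if "i < n1 + n2" for i
    using c1 c2 that unfolding L_def xs_def ys_def by auto
  have fc: "f \<in> {..<n1+n2} \<rightarrow> carrier (tlev T H)"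
    using c term_carr unfolding f_def by auto
  have "finsum (tlev T H) f {..<n1+n2} = finsum (tlev T H) f {..<n1} \<oplus>\<^bsub>tlev T H\<^esub> finsum (tlev T H) (\<lambda>i. f (n1+i)) {..<n2}"
    by (rule ring.finsum_concat[OF rg[OF H] fc])
  also have "finsum (tlev T H) f {..<n1} = a"
    unfolding a' f_def L_def xs_def ys_def
    by (rule fs_cong[OF H]) (use c1 term_carr in auto)
  also have "finsum (tlev T H) (\<lambda>i. f (n1+i)) {..<n2} = b"
    unfolding b' f_def L_def xs_def ys_def
    by (rule fs_cong[OF H]) (use c2 term_carr in auto)
  finally have "a \<oplus>\<^bsub>tlev T H\<^esub> b = finsum (tlev T H) f {..<n1+n2}" ..
  moreover have "finsum (tlev T H) f {..<n1+n2} \<in> VV G T XX YY H"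
    unfolding f_def by (rule VV_intro) (use c in auto)
  ultimately show ?thesis by simp
qed

lemma VV_sum:
  assumes H: "subgroup H G" shows "f \<in> A \<rightarrow> VV G T XX YY H \<Longrightarrow> finsum (tlev T H) f A \<in> VV G T XX YY H"
  by (rule ring.finsum_in_set[OF rg[OF H] VV_carr[OF H] VV_zero[OF H] VV_add[OF H]])

lemma VV_map:
  assumes H: "subgroup H G" and H': "subgroup H' G"
    and F: "F \<in> carrier (tlev T H) \<rightarrow> carrier (tlev T H')"
    and Fadd: "\<And>a b. a \<in> carrier (tlev T H) \<Longrightarrow> b \<in> carrier (tlev T H) \<Longrightarrow>
        F (a \<oplus>\<^bsub>tlev T H\<^esub> b) = F a \<oplus>\<^bsub>tlev T H'\<^esub> F b"
    and Ft: "\<And>L x y. subgrp_le G L H \<Longrightarrow> x \<in> XX L \<Longrightarrow> y \<in> YY L \<Longrightarrow> F (ttr T L H (x \<otimes>\<^bsub>tlev T L\<^esub> y)) \<in> VV G T XX YY H'"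
    and v: "v \<in> VV G T XX YY H"
  shows "F v \<in> VV G T XX YY H'"
proof -
  obtain L xs ys n where v': "v = finsum (tlev T H) (\<lambda>i. ttr T (L i) H (xs i \<otimes>\<^bsub>tlev T (L i)\<^esub> ys i)) {..<(n::nat)}"
    and c: "\<And>i. i < n \<Longrightarrow> subgrp_le G (L i) H" "\<And>i. i < n \<Longrightarrow> xs i \<in> XX (L i)" "\<And>i. i < n \<Longrightarrow> ys i \<in> YY (L i)"
    using v by (rule VV_elim) blast
  have "F v = finsum (tlev T H') (F \<circ> (\<lambda>i. ttr T (L i) H (xs i \<otimes>\<^bsub>tlev T (L i)\<^esub> ys i))) {..<n}"
    unfolding v' by (rule add_hom_finsum[OF rg[OF H] rg[OF H'] F Fadd]) (use c term_carr in auto)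
  also have "\<dots> \<in> VV G T XX YY H'"
    by (rule VV_sum[OF H']) (use c Ft in auto)
  finally show ?thesis .
qed


lemma VV_rmult:
  assumes H: "subgroup H G" and v: "v \<in> VV G T XX YY H" and c: "c \<in> carrier (tlev T H)"
  shows "v \<otimes>\<^bsub>tlev T H\<^esub> c \<in> VV G T XX YY H"
proof -
  interpret R: cring "tlev T H" by (rule cr[OF H])
  show ?thesis
  proof (rule VV_map[OF H H _ _ _ v, where F = "\<lambda>v. v \<otimes>\<^bsub>tlev T H\<^esub> c"])
    show "(\<lambda>v. v \<otimes>\<^bsub>tlev T H\<^esub> c) \<in> carrier (tlev T H) \<rightarrow> carrier (tlev T H)" using c by auto
    fix a b assume "a \<in> carrier (tlev T H)" "b \<in> carrier (tlev T H)"
    then show "(a \<oplus>\<^bsub>tlev T H\<^esub> b) \<otimes>\<^bsub>tlev T H\<^esub> c = a \<otimes>\<^bsub>tlev T H\<^esub> c \<oplus>\<^bsub>tlev T H\<^esub> b \<otimes>\<^bsub>tlev T H\<^esub> c"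
      using c by (simp add: R.l_distr)
  next
    fix L x y assume LH: "subgrp_le G L H" and x: "x \<in> XX L" and y: "y \<in> YY L"
    interpret RL: cring "tlev T L" by (rule cr[OF sle_sub1[OF LH]])
    have xc: "x \<in> carrier (tlev T L)" using ti_carr[OF TX sle_sub1[OF LH]] x by auto
    have yc: "y \<in> carrier (tlev T L)" using ti_carr[OF TY sle_sub1[OF LH]] y by auto
    have rc: "tres T H L c \<in> carrier (tlev T L)" using res_carr[OF LH c] .
    have "ttr T L H (x \<otimes>\<^bsub>tlev T L\<^esub> y) \<otimes>\<^bsub>tlev T H\<^esub> c = ttr T L H ((x \<otimes>\<^bsub>tlev T L\<^esub> y) \<otimes>\<^bsub>tlev T L\<^esub> tres T H L c)"
      by (rule frob[OF LH]) (use xc yc c in auto)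
    also have "\<dots> = ttr T L H (x \<otimes>\<^bsub>tlev T L\<^esub> (y \<otimes>\<^bsub>tlev T L\<^esub> tres T H L c))"
      using xc yc rc by (simp add: RL.m_assoc)
    also have "\<dots> \<in> VV G T XX YY H"
      by (rule VV_single[OF LH x]) (rule ideal.I_r_closed[OF ti_ideal[OF TY sle_sub1[OF LH]] y rc])
    finally show "ttr T L H (x \<otimes>\<^bsub>tlev T L\<^esub> y) \<otimes>\<^bsub>tlev T H\<^esub> c \<in> VV G T XX YY H" .
  qed
qed

lemma VV_lmult:
  assumes H: "subgroup H G" and v: "v \<in> VV G T XX YY H" and c: "c \<in> carrier (tlev T H)"
  shows "c \<otimes>\<^bsub>tlev T H\<^esub> v \<in> VV G T XX YY H"
proof -
  interpret R: cring "tlev T H" by (rule cr[OF H])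
  have "c \<otimes>\<^bsub>tlev T H\<^esub> v = v \<otimes>\<^bsub>tlev T H\<^esub> c" using c VV_carr[OF H] v by (auto simp: R.m_comm)
  then show ?thesis using VV_rmult[OF H v c] by simp
qed

lemma VV_ideal:
  assumes H: "subgroup H G" shows "ideal (VV G T XX YY H) (tlev T H)"
proof -
  interpret R: cring "tlev T H" by (rule cr[OF H])
  show ?thesis
  proof (rule idealI)
    show "ring (tlev T H)" by (rule R.ring_axioms)
    have s1: "VV G T XX YY H \<subseteq> carrier (tlev T H)" using VV_carr[OF H] by simp
    have s2: "VV G T XX YY H \<noteq> {}" using VV_zero[OF H] by blast
    have s3: "\<ominus>\<^bsub>tlev T H\<^esub> a \<in> VV G T XX YY H" if a: "a \<in> VV G T XX YY H" for a
    proof -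
      have ac: "a \<in> carrier (tlev T H)" using a VV_carr[OF H] by auto
      have e1: "(\<ominus>\<^bsub>tlev T H\<^esub> \<one>\<^bsub>tlev T H\<^esub>) \<otimes>\<^bsub>tlev T H\<^esub> a = \<ominus>\<^bsub>tlev T H\<^esub> a"
        using ac by (simp add: R.l_minus)
      have "(\<ominus>\<^bsub>tlev T H\<^esub> \<one>\<^bsub>tlev T H\<^esub>) \<otimes>\<^bsub>tlev T H\<^esub> a \<in> VV G T XX YY H"
        by (rule VV_lmult[OF H a]) simp
      then show ?thesis unfolding e1 .
    qed
    have s4: "a \<oplus>\<^bsub>tlev T H\<^esub> b \<in> VV G T XX YY H"
      if "a \<in> VV G T XX YY H" "b \<in> VV G T XX YY H" for a b
      using VV_add[OF H] that by simp
    show "subgroup (VV G T XX YY H) (add_monoid (tlev T H))"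
      by (rule R.add.subgroupI[OF s1 s2 s3 s4])
  next
    fix a x assume "a \<in> VV G T XX YY H" "x \<in> carrier (tlev T H)"
    then show "x \<otimes>\<^bsub>tlev T H\<^esub> a \<in> VV G T XX YY H" using VV_lmult[OF H] by blast
  next
    fix a x assume "a \<in> VV G T XX YY H" "x \<in> carrier (tlev T H)"
    then show "a \<otimes>\<^bsub>tlev T H\<^esub> x \<in> VV G T XX YY H" using VV_rmult[OF H] by blast
  qed
qed

lemma VV_tr:
  assumes HH: "subgrp_le G H H'" and v: "v \<in> VV G T XX YY H"
  shows "ttr T H H' v \<in> VV G T XX YY H'"
proof (rule VV_map[OF sle_sub1[OF HH] sle_sub2[OF HH] _ _ _ v])
  show "ttr T H H' \<in> carrier (tlev T H) \<rightarrow> carrier (tlev T H')" using tr_carr[OF HH] by auto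
  fix a b assume "a \<in> carrier (tlev T H)" "b \<in> carrier (tlev T H)"
  then show "ttr T H H' (a \<oplus>\<^bsub>tlev T H\<^esub> b) = ttr T H H' a \<oplus>\<^bsub>tlev T H'\<^esub> ttr T H H' b"
    by (rule tr_add[OF HH])
next
  fix L x y assume LH: "subgrp_le G L H" and x: "x \<in> XX L" and y: "y \<in> YY L"
  have "ttr T H H' (ttr T L H (x \<otimes>\<^bsub>tlev T L\<^esub> y)) = ttr T L H' (x \<otimes>\<^bsub>tlev T L\<^esub> y)"
    by (rule tr_trans[OF LH HH prod_carr[OF sle_sub1[OF LH] x y]])
  also have "\<dots> \<in> VV G T XX YY H'" by (rule VV_single[OF sle_trans[OF LH HH] x y])
  finally show "ttr T H H' (ttr T L H (x \<otimes>\<^bsub>tlev T L\<^esub> y)) \<in> VV G T XX YY H'" .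
qed

lemma VV_cj:
  assumes g: "g \<in> carrier G" and H: "subgroup H G" and v: "v \<in> VV G T XX YY H"
  shows "tcj T g H v \<in> VV G T XX YY (conjg G g H)"
proof (rule VV_map[OF H conjg_sub[OF g H] _ _ _ v])
  show "tcj T g H \<in> carrier (tlev T H) \<rightarrow> carrier (tlev T (conjg G g H))" using cj_carr[OF g H] by auto
  fix a b assume "a \<in> carrier (tlev T H)" "b \<in> carrier (tlev T H)"
  then show "tcj T g H (a \<oplus>\<^bsub>tlev T H\<^esub> b) = tcj T g H a \<oplus>\<^bsub>tlev T (conjg G g H)\<^esub> tcj T g H b"
    by (rule ring_hom_add[OF cj_hom[OF g H]])
next
  fix L x y assume LH: "subgrp_le G L H" and x: "x \<in> XX L" and y: "y \<in> YY L"
  have L: "subgroup L G" using sle_sub1[OF LH] .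
  have xc: "x \<in> carrier (tlev T L)" using ti_carr[OF TX L] x by auto
  have yc: "y \<in> carrier (tlev T L)" using ti_carr[OF TY L] y by auto
  have "tcj T g H (ttr T L H (x \<otimes>\<^bsub>tlev T L\<^esub> y)) =
      ttr T (conjg G g L) (conjg G g H) (tcj T g L (x \<otimes>\<^bsub>tlev T L\<^esub> y))"
    by (rule cj_tr[OF g LH prod_carr[OF L x y]])
  also have "\<dots> = ttr T (conjg G g L) (conjg G g H) (tcj T g L x \<otimes>\<^bsub>tlev T (conjg G g L)\<^esub> tcj T g L y)"
    using cj_mult[OF g L xc yc] by simp
  also have "\<dots> \<in> VV G T XX YY (conjg G g H)"
    by (rule VV_single[OF conjg_le[OF g LH] ti_cj[OF TX g L x] ti_cj[OF TY g L y]])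
  finally show "tcj T g H (ttr T L H (x \<otimes>\<^bsub>tlev T L\<^esub> y)) \<in> VV G T XX YY (conjg G g H)" .
qed


lemma VV_res:
  assumes KH: "subgrp_le G K H" and v: "v \<in> VV G T XX YY H"
  shows "tres T H K v \<in> VV G T XX YY K"
proof (rule VV_map[OF sle_sub2[OF KH] sle_sub1[OF KH] _ _ _ v])
  have K: "subgroup K G" and H: "subgroup H G" using KH unfolding subgrp_le_def by auto
  show "tres T H K \<in> carrier (tlev T H) \<rightarrow> carrier (tlev T K)" using res_carr[OF KH] by auto
  fix a b assume "a \<in> carrier (tlev T H)" "b \<in> carrier (tlev T H)"
  then show "tres T H K (a \<oplus>\<^bsub>tlev T H\<^esub> b) = tres T H K a \<oplus>\<^bsub>tlev T K\<^esub> tres T H K b"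
    by (rule ring_hom_add[OF res_hom[OF KH]])
next
  have K: "subgroup K G" and H: "subgroup H G" using KH unfolding subgrp_le_def by auto
  fix L x y assume LH: "subgrp_le G L H" and x: "x \<in> XX L" and y: "y \<in> YY L"
  have L: "subgroup L G" using sle_sub1[OF LH] .
  have "tres T H K (ttr T L H (x \<otimes>\<^bsub>tlev T L\<^esub> y)) =
         (\<Oplus>\<^bsub>tlev T K\<^esub> D \<in> dcos G H K L.
            (let g = (SOME g. g \<in> D); M = conjg G (inv\<^bsub>G\<^esub> g) K \<inter> L in
             ttr T (K \<inter> conjg G g L) K (tcj T g M (tres T L M (x \<otimes>\<^bsub>tlev T L\<^esub> y)))))"
    by (rule mackey[OF KH LH prod_carr[OF L x y]])
  also have "\<dots> \<in> VV G T XX YY K"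
  proof (rule VV_sum[OF K], rule Pi_I)
    fix D assume D: "D \<in> dcos G H K L"
    define g where "g = (SOME g. g \<in> D)"
    have gH: "g \<in> H" unfolding g_def
      by (rule dcos_rep[OF H K L _ _ D]) (use KH LH in \<open>auto simp: subgrp_le_def\<close>)
    have gc: "g \<in> carrier G" by (rule subgroup.mem_carrier[OF H gH])
    define M where "M = conjg G (inv g) K \<inter> L"
    have cK: "subgroup (conjg G (inv g) K) G" using conjg_sub[OF inv_closed[OF gc] K] .
    have M: "subgroup M G" unfolding M_def by (rule subgroups_Inter_pair[OF cK L])
    have MsL: "subgrp_le G M L" using M L unfolding subgrp_le_def M_def by auto
    have xc: "x \<in> carrier (tlev T L)" using ti_carr[OF TX L] x by auto
    have yc: "y \<in> carrier (tlev T L)" using ti_carr[OF TY L] y by auto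
    have x': "tres T L M x \<in> XX M" by (rule ti_res[OF TX MsL x])
    have y': "tres T L M y \<in> YY M" by (rule ti_res[OF TY MsL y])
    have x'c: "tres T L M x \<in> carrier (tlev T M)" using res_carr[OF MsL xc] .
    have y'c: "tres T L M y \<in> carrier (tlev T M)" using res_carr[OF MsL yc] .
    have Kc: "K \<subseteq> carrier G" using K subgroup.subset by blast
    have Lc: "L \<subseteq> carrier G" using L subgroup.subset by blast
    have cKc: "conjg G (inv g) K \<subseteq> carrier G" using cK subgroup.subset by blast
    have eqM: "conjg G g M = K \<inter> conjg G g L"
      unfolding M_def conjg_Int[OF gc cKc Lc] conjg_inv[OF gc Kc] ..
    have sle: "subgrp_le G (conjg G g M) K"
      using conjg_sub[OF gc M] K eqM unfolding subgrp_le_def by auto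
    have "tcj T g M (tres T L M (x \<otimes>\<^bsub>tlev T L\<^esub> y)) =
          tcj T g M (tres T L M x) \<otimes>\<^bsub>tlev T (conjg G g M)\<^esub> tcj T g M (tres T L M y)"
      using res_mult[OF MsL xc yc] cj_mult[OF gc M x'c y'c] by simp
    then have "ttr T (K \<inter> conjg G g L) K (tcj T g M (tres T L M (x \<otimes>\<^bsub>tlev T L\<^esub> y))) =
         ttr T (conjg G g M) K (tcj T g M (tres T L M x) \<otimes>\<^bsub>tlev T (conjg G g M)\<^esub> tcj T g M (tres T L M y))"
      using eqM by simp
    also have "\<dots> \<in> VV G T XX YY K"
      by (rule VV_single[OF sle ti_cj[OF TX gc M x'] ti_cj[OF TY gc M y']])
    finally show "(let g = (SOME g. g \<in> D); M = conjg G (inv\<^bsub>G\<^esub> g) K \<inter> L in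
             ttr T (K \<inter> conjg G g L) K (tcj T g M (tres T L M (x \<otimes>\<^bsub>tlev T L\<^esub> y)))) \<in> VV G T XX YY K"
      unfolding Let_def g_def[symmetric] M_def[symmetric] .
  qed
  finally show "tres T H K (ttr T L H (x \<otimes>\<^bsub>tlev T L\<^esub> y)) \<in> VV G T XX YY K" .
qed


lemma eterm_VV:
  assumes KH: "subgrp_le G K H" and Ls: "\<And>i. i < n \<Longrightarrow> subgrp_le G (L i) K"
    and xs: "\<And>i. i < n \<Longrightarrow> xs i \<in> XX (L i)" and ys: "\<And>i. i < n \<Longrightarrow> ys i \<in> YY (L i)"
    and s: "s \<in> esections G H K n L"
  shows "eterm G T H K L (\<lambda>i. xs i \<otimes>\<^bsub>tlev T (L i)\<^esub> ys i) s \<in> VV G T XX YY H"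
proof -
  have Hg: "subgroup H G" using KH by (rule sle_sub2)
  have Kg: "subgroup K G" using KH by (rule sle_sub1)
  define S where "S = estab G H K s"
  have SH: "subgrp_le G S H" unfolding S_def by (rule estab_sub[OF KH Ls s])
  have Sg: "subgroup S G" using SH by (rule sle_sub1)
  interpret RS: cring "tlev T S" by (rule cr[OF Sg])
  define Obs where "Obs = {{l_coset G h x | h. h \<in> S} | x. x \<in> lcos G H K}"
  define F where "F Ob = (let x = (SOME x. x \<in> Ob); h = (SOME h. h \<in> x); i = fst (s x);
        h' = (SOME h'. h' \<in> snd (s x)); Sx = S \<inter> conjg G h K
     in tnm T Sx S (tres T (conjg G h' (L i)) Sx (tcj T h' (L i) ((\<lambda>i. xs i \<otimes>\<^bsub>tlev T (L i)\<^esub> ys i) i))))" for Ob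
  define U where "U Ob = (let x = (SOME x. x \<in> Ob); h = (SOME h. h \<in> x); i = fst (s x);
        h' = (SOME h'. h' \<in> snd (s x)); Sx = S \<inter> conjg G h K
     in tnm T Sx S (tres T (conjg G h' (L i)) Sx (tcj T h' (L i) (xs i))))" for Ob
  define W where "W Ob = (let x = (SOME x. x \<in> Ob); h = (SOME h. h \<in> x); i = fst (s x);
        h' = (SOME h'. h' \<in> snd (s x)); Sx = S \<inter> conjg G h K
     in tnm T Sx S (tres T (conjg G h' (L i)) Sx (tcj T h' (L i) (ys i))))" for Ob
  have e0: "eterm G T H K L (\<lambda>i. xs i \<otimes>\<^bsub>tlev T (L i)\<^esub> ys i) s = ttr T S H (finprod (tlev T S) F Obs)"
    unfolding eterm_def S_def F_def Obs_def by (simp only: Let_def)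
  have Obs_img: "Obs = (\<lambda>x. {l_coset G h x | h. h \<in> S}) ` lcos G H K" unfolding Obs_def by blast
  have fin: "finite Obs" unfolding Obs_img by (rule finite_imageI[OF lcos_finite[OF Hg]])
  have ne: "Obs \<noteq> {}" unfolding Obs_img using lcos_self[OF Hg Kg] by blast
  have dec: "F Ob = U Ob \<otimes>\<^bsub>tlev T S\<^esub> W Ob \<and> U Ob \<in> XX S \<and> W Ob \<in> YY S" if Ob: "Ob \<in> Obs" for Ob
  proof -
    define x where "x = (SOME x. x \<in> Ob)"
    define h where "h = (SOME h. h \<in> x)"
    define i where "i = fst (s x)"
    define h' where "h' = (SOME h'. h' \<in> snd (s x))"
    define Sx where "Sx = S \<inter> conjg G h K"
    have Ob': "Ob \<in> {{l_coset G h x | h. h \<in> estab G H K s} | x. x \<in> lcos G H K}"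
      using Ob unfolding Obs_def S_def .
    note od = orb_data[OF KH Ls s Ob']
    have i: "i < n" unfolding i_def x_def by (rule od(1))
    have h'c: "h' \<in> carrier G" unfolding h'_def x_def by (rule od(2))
    have s1: "subgrp_le G Sx S" unfolding Sx_def h_def x_def S_def by (rule od(3))
    have s2: "subgrp_le G Sx (conjg G h' (L i))" unfolding Sx_def h_def x_def S_def h'_def i_def by (rule od(4))
    have Lg: "subgroup (L i) G" by (rule sle_sub1[OF Ls[OF i]])
    have xi: "xs i \<in> XX (L i)" by (rule xs[OF i])
    have yi: "ys i \<in> YY (L i)" by (rule ys[OF i])
    have xc: "xs i \<in> carrier (tlev T (L i))" using ti_carr[OF TX Lg] xi by blast
    have yc: "ys i \<in> carrier (tlev T (L i))" using ti_carr[OF TY Lg] yi by blast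
    have cx: "tcj T h' (L i) (xs i) \<in> carrier (tlev T (conjg G h' (L i)))" by (rule cj_carr[OF h'c Lg xc])
    have cy: "tcj T h' (L i) (ys i) \<in> carrier (tlev T (conjg G h' (L i)))" by (rule cj_carr[OF h'c Lg yc])
    have rx: "tres T (conjg G h' (L i)) Sx (tcj T h' (L i) (xs i)) \<in> carrier (tlev T Sx)" by (rule res_carr[OF s2 cx])
    have ry: "tres T (conjg G h' (L i)) Sx (tcj T h' (L i) (ys i)) \<in> carrier (tlev T Sx)" by (rule res_carr[OF s2 cy])
    have eF: "F Ob = tnm T Sx S (tres T (conjg G h' (L i)) Sx (tcj T h' (L i) (xs i \<otimes>\<^bsub>tlev T (L i)\<^esub> ys i)))"
      unfolding F_def Let_def x_def h_def i_def h'_def Sx_def by (rule refl)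
    have eU: "U Ob = tnm T Sx S (tres T (conjg G h' (L i)) Sx (tcj T h' (L i) (xs i)))"
      unfolding U_def Let_def x_def h_def i_def h'_def Sx_def by (rule refl)
    have eW: "W Ob = tnm T Sx S (tres T (conjg G h' (L i)) Sx (tcj T h' (L i) (ys i)))"
      unfolding W_def Let_def x_def h_def i_def h'_def Sx_def by (rule refl)
    have "F Ob = U Ob \<otimes>\<^bsub>tlev T S\<^esub> W Ob"
      unfolding eF eU eW cj_mult[OF h'c Lg xc yc] res_mult[OF s2 cx cy] nm_mult[OF s1 rx ry] ..
    moreover have "U Ob \<in> XX S" unfolding eU
      by (rule ti_nm[OF TX s1 ti_res[OF TX s2 ti_cj[OF TX h'c Lg xi]]])
    moreover have "W Ob \<in> YY S" unfolding eW
      by (rule ti_nm[OF TY s1 ti_res[OF TY s2 ti_cj[OF TY h'c Lg yi]]])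
    ultimately show ?thesis by blast
  qed
  have Uc: "U \<in> Obs \<rightarrow> carrier (tlev T S)" using dec ti_carr[OF TX Sg] by blast
  have Wc: "W \<in> Obs \<rightarrow> carrier (tlev T S)" using dec ti_carr[OF TY Sg] by blast
  have "finprod (tlev T S) F Obs = finprod (tlev T S) (\<lambda>Ob. U Ob \<otimes>\<^bsub>tlev T S\<^esub> W Ob) Obs"
    by (rule RS.finprod_cong') (use dec Uc Wc in auto)
  also have "\<dots> = finprod (tlev T S) U Obs \<otimes>\<^bsub>tlev T S\<^esub> finprod (tlev T S) W Obs"
    by (rule RS.finprod_multf[OF Uc Wc])
  finally have e1: "finprod (tlev T S) F Obs = finprod (tlev T S) U Obs \<otimes>\<^bsub>tlev T S\<^esub> finprod (tlev T S) W Obs" .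
  have pU: "finprod (tlev T S) U Obs \<in> XX S"
    by (rule RS.finprod_in_ideal[OF ti_ideal[OF TX Sg] fin ne]) (use dec in blast)
  have pW: "finprod (tlev T S) W Obs \<in> YY S"
    by (rule RS.finprod_in_ideal[OF ti_ideal[OF TY Sg] fin ne]) (use dec in blast)
  show ?thesis unfolding e0 e1 by (rule VV_single[OF SH pU pW])
qed

lemma VV_nm:
  assumes KH: "subgrp_le G K H" and v: "v \<in> VV G T XX YY K"
  shows "tnm T K H v \<in> VV G T XX YY H"
proof -
  have Hg: "subgroup H G" using KH by (rule sle_sub2)
  obtain L xs ys n where v': "v = finsum (tlev T K) (\<lambda>i. ttr T (L i) K (xs i \<otimes>\<^bsub>tlev T (L i)\<^esub> ys i)) {..<(n::nat)}"
    and c: "\<And>i. i < n \<Longrightarrow> subgrp_le G (L i) K" "\<And>i. i < n \<Longrightarrow> xs i \<in> XX (L i)" "\<And>i. i < n \<Longrightarrow> ys i \<in> YY (L i)"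
    using v by (rule VV_elim) blast
  have ac: "xs i \<otimes>\<^bsub>tlev T (L i)\<^esub> ys i \<in> carrier (tlev T (L i))" if "i < n" for i
    by (rule prod_carr[OF sle_sub1[OF c(1)[OF that]] c(2)[OF that] c(3)[OF that]])
  have "tnm T K H v = eformula G T H K n L (\<lambda>i. xs i \<otimes>\<^bsub>tlev T (L i)\<^esub> ys i)"
    unfolding v' by (rule expo[OF KH]) (use c ac in auto)
  also have "\<dots> \<in> VV G T XX YY H"
    unfolding eformula_def
  proof (rule VV_sum[OF Hg], rule Pi_I)
    fix Ob assume Ob: "Ob \<in> eorbits G H K n L"
    show "eterm G T H K L (\<lambda>i. xs i \<otimes>\<^bsub>tlev T (L i)\<^esub> ys i) (SOME s. s \<in> Ob) \<in> VV G T XX YY H"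
      by (rule eterm_VV[OF KH c eorb_some[OF KH c(1) Ob]])
  qed
  finally show ?thesis .
qed

lemma VV_ti: "tambara_ideal G T (VV G T XX YY)"
  unfolding tambara_ideal_def
proof (intro conjI allI impI ballI subsetI)
  fix H assume "subgroup H G" then show "ideal (VV G T XX YY H) (tlev T H)" by (rule VV_ideal)
next
  fix H K r assume KH: "subgrp_le G K H" and "r \<in> tres T H K ` VV G T XX YY H"
  then show "r \<in> VV G T XX YY K" using VV_res[OF KH] by blast
next
  fix H K r assume KH: "subgrp_le G K H" and "r \<in> ttr T K H ` VV G T XX YY K"
  then show "r \<in> VV G T XX YY H" using VV_tr[OF KH] by blast
next
  fix H K r assume KH: "subgrp_le G K H" and "r \<in> tnm T K H ` VV G T XX YY K"
  then show "r \<in> VV G T XX YY H" using VV_nm[OF KH] by blast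
next
  fix g H r assume g: "g \<in> carrier G" and H: "subgroup H G" and "r \<in> tcj T g H ` VV G T XX YY H"
  then show "r \<in> VV G T XX YY (conjg G g H)" using VV_cj[OF g H] by blast
qed

end

subsection \<open>Products of Tambara ideals\<close>

lemma tle_refl: "tideal_le G A A" unfolding tideal_le_def by blast
lemma tle_trans: "tideal_le G A B \<Longrightarrow> tideal_le G B C \<Longrightarrow> tideal_le G A C"
  unfolding tideal_le_def by blast

lemma tleD: "tideal_le G A B \<Longrightarrow> subgroup H G \<Longrightarrow> x \<in> A H \<Longrightarrow> x \<in> B H"
  unfolding tideal_le_def by blast

lemma tgen_supI: "subgroup H G \<Longrightarrow> r \<in> Xs H \<Longrightarrow> r \<in> tgen G T Xs H"
  unfolding tgen_def tideal_le_def by blast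

lemma tprodI: "subgroup H G \<Longrightarrow> x \<in> XX H \<Longrightarrow> y \<in> YY H \<Longrightarrow> x \<otimes>\<^bsub>tlev T H\<^esub> y \<in> tprod G T XX YY H"
  unfolding tprod_def by (rule tgen_supI) (auto intro: ideal_prod.prod)

lemma iprod_sub:
  assumes W: "ideal W R" and "\<And>x y. x \<in> A \<Longrightarrow> y \<in> B \<Longrightarrow> x \<otimes>\<^bsub>R\<^esub> y \<in> W"
  shows "ideal_prod R A B \<subseteq> W"
proof
  fix s assume "s \<in> ideal_prod R A B"
  then show "s \<in> W"
  proof (induct s rule: ideal_prod.induct)
    case (prod i j) then show ?case using assms(2) by blast
  next
    case (sum s1 s2) then show ?case using additive_subgroup.a_closed[OF ideal.axioms(1)[OF W]] by blast
  qed
qed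

lemma tprod_ti:
  assumes TX: "tambara_ideal G T XX" and TY: "tambara_ideal G T YY"
  shows "tambara_ideal G T (tprod G T XX YY)"
  unfolding tprod_def
proof (rule tgen_ti)
  fix H assume H: "subgroup H G"
  show "ideal_prod (tlev T H) (XX H) (YY H) \<subseteq> carrier (tlev T H)"
    by (rule ring.ideal_prod_in_carrier[OF rg[OF H] ti_ideal[OF TX H] ti_ideal[OF TY H]])
qed

lemma tprod_le:
  assumes TX: "tambara_ideal G T XX" and TY: "tambara_ideal G T YY"
  shows "tideal_le G (tprod G T XX YY) XX" "tideal_le G (tprod G T XX YY) YY"
proof -
  show "tideal_le G (tprod G T XX YY) XX" unfolding tprod_def
  proof (rule tgen_min[OF TX])
    show "tideal_le G (\<lambda>H. ideal_prod (tlev T H) (XX H) (YY H)) XX" unfolding tideal_le_def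
    proof (intro allI impI)
      fix H assume H: "subgroup H G"
      show "ideal_prod (tlev T H) (XX H) (YY H) \<subseteq> XX H"
        using ring.ideal_prod_inter[OF rg[OF H] ti_ideal[OF TX H] ti_ideal[OF TY H]] by auto
    qed
  qed
  show "tideal_le G (tprod G T XX YY) YY" unfolding tprod_def
  proof (rule tgen_min[OF TY])
    show "tideal_le G (\<lambda>H. ideal_prod (tlev T H) (XX H) (YY H)) YY" unfolding tideal_le_def
    proof (intro allI impI)
      fix H assume H: "subgroup H G"
      show "ideal_prod (tlev T H) (XX H) (YY H) \<subseteq> YY H"
        using ring.ideal_prod_inter[OF rg[OF H] ti_ideal[OF TX H] ti_ideal[OF TY H]] by auto
    qed
  qed
qed

lemma tprod_mono:
  assumes TX: "tambara_ideal G T XX" and TY: "tambara_ideal G T YY"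
    and TX': "tambara_ideal G T XX'" and TY': "tambara_ideal G T YY'"
    and le1: "tideal_le G XX XX'" and le2: "tideal_le G YY YY'"
  shows "tideal_le G (tprod G T XX YY) (tprod G T XX' YY')"
  unfolding tprod_def[of G T XX YY]
proof (rule tgen_min[OF tprod_ti[OF TX' TY']])
  show "tideal_le G (\<lambda>H. ideal_prod (tlev T H) (XX H) (YY H)) (tprod G T XX' YY')"
    unfolding tideal_le_def
  proof (intro allI impI)
    fix H assume H: "subgroup H G"
    show "ideal_prod (tlev T H) (XX H) (YY H) \<subseteq> tprod G T XX' YY' H"
    proof (rule iprod_sub[OF ti_ideal[OF tprod_ti[OF TX' TY'] H]])
      fix x y assume x: "x \<in> XX H" and y: "y \<in> YY H"
      show "x \<otimes>\<^bsub>tlev T H\<^esub> y \<in> tprod G T XX' YY' H"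
        by (rule tprodI[where XX=XX' and YY=YY', OF H tleD[OF le1 H x] tleD[OF le2 H y]])
    qed
  qed
qed

lemma tprod_VV:
  assumes TX: "tambara_ideal G T XX" and TY: "tambara_ideal G T YY"
  shows "tideal_le G (tprod G T XX YY) (VV G T XX YY)"
  unfolding tprod_def
proof (rule tgen_min[OF VV_ti[OF TX TY]])
  show "tideal_le G (\<lambda>H. ideal_prod (tlev T H) (XX H) (YY H)) (VV G T XX YY)"
    unfolding tideal_le_def
  proof (intro allI impI)
    fix H assume H: "subgroup H G"
    show "ideal_prod (tlev T H) (XX H) (YY H) \<subseteq> VV G T XX YY H"
    proof (rule iprod_sub[OF VV_ideal[OF TX TY H]])
      fix x y assume x: "x \<in> XX H" and y: "y \<in> YY H"
      have "ttr T H H (x \<otimes>\<^bsub>tlev T H\<^esub> y) \<in> VV G T XX YY H"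
        by (rule VV_single[OF TX TY sle_refl[OF H] x y])
      moreover have "ttr T H H (x \<otimes>\<^bsub>tlev T H\<^esub> y) = x \<otimes>\<^bsub>tlev T H\<^esub> y"
        by (rule tr_id[OF H prod_carr[OF TX TY H x y]])
      ultimately show "x \<otimes>\<^bsub>tlev T H\<^esub> y \<in> VV G T XX YY H" by simp
    qed
  qed
qed

lemma VV_mult_into:
  assumes TX: "tambara_ideal G T XX" and TY: "tambara_ideal G T YY" and TW: "tambara_ideal G T WW"
    and H: "subgroup H G" and w: "w \<in> VV G T XX YY H" and z: "z \<in> carrier (tlev T H)"
    and step: "\<And>L x y. subgrp_le G L H \<Longrightarrow> x \<in> XX L \<Longrightarrow> y \<in> YY L \<Longrightarrow>
        x \<otimes>\<^bsub>tlev T L\<^esub> (y \<otimes>\<^bsub>tlev T L\<^esub> tres T H L z) \<in> WW L"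
  shows "w \<otimes>\<^bsub>tlev T H\<^esub> z \<in> WW H"
proof -
  interpret R: cring "tlev T H" by (rule cr[OF H])
  obtain L xs ys n where w': "w = finsum (tlev T H) (\<lambda>i. ttr T (L i) H (xs i \<otimes>\<^bsub>tlev T (L i)\<^esub> ys i)) {..<(n::nat)}"
    and c: "\<And>i. i < n \<Longrightarrow> subgrp_le G (L i) H" "\<And>i. i < n \<Longrightarrow> xs i \<in> XX (L i)" "\<And>i. i < n \<Longrightarrow> ys i \<in> YY (L i)"
    using w by (rule VV_elim[OF TX TY]) blast
  have tc: "ttr T (L i) H (xs i \<otimes>\<^bsub>tlev T (L i)\<^esub> ys i) \<in> carrier (tlev T H)" if "i < n" for i
    by (rule term_carr[OF TX TY c(1)[OF that] c(2)[OF that] c(3)[OF that]])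
  have "w \<otimes>\<^bsub>tlev T H\<^esub> z = finsum (tlev T H) ((\<lambda>v. v \<otimes>\<^bsub>tlev T H\<^esub> z) \<circ> (\<lambda>i. ttr T (L i) H (xs i \<otimes>\<^bsub>tlev T (L i)\<^esub> ys i))) {..<n}"
    unfolding w'
    by (rule add_hom_finsum[OF R.ring_axioms R.ring_axioms]) (use z tc in \<open>auto simp: R.l_distr\<close>)
  also have "\<dots> \<in> WW H"
  proof (rule R.finsum_in_set)
    show "WW H \<subseteq> carrier (tlev T H)" by (rule ti_carr[OF TW H])
    show "\<zero>\<^bsub>tlev T H\<^esub> \<in> WW H" using additive_subgroup.zero_closed[OF ideal.axioms(1)[OF ti_ideal[OF TW H]]] .
    show "a \<oplus>\<^bsub>tlev T H\<^esub> b \<in> WW H" if "a \<in> WW H" "b \<in> WW H" for a b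
      using additive_subgroup.a_closed[OF ideal.axioms(1)[OF ti_ideal[OF TW H]] that] .
    show "(\<lambda>v. v \<otimes>\<^bsub>tlev T H\<^esub> z) \<circ> (\<lambda>i. ttr T (L i) H (xs i \<otimes>\<^bsub>tlev T (L i)\<^esub> ys i)) \<in> {..<n} \<rightarrow> WW H"
    proof (rule Pi_I)
      fix i assume "i \<in> {..<n}"
      then have i: "i < n" by simp
      have LH: "subgrp_le G (L i) H" by (rule c(1)[OF i])
      have Lg: "subgroup (L i) G" by (rule sle_sub1[OF LH])
      interpret RL: cring "tlev T (L i)" by (rule cr[OF Lg])
      have xc: "xs i \<in> carrier (tlev T (L i))" using ti_carr[OF TX Lg] c(2)[OF i] by blast
      have yc: "ys i \<in> carrier (tlev T (L i))" using ti_carr[OF TY Lg] c(3)[OF i] by blast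
      have rc: "tres T H (L i) z \<in> carrier (tlev T (L i))" by (rule res_carr[OF LH z])
      have "ttr T (L i) H (xs i \<otimes>\<^bsub>tlev T (L i)\<^esub> ys i) \<otimes>\<^bsub>tlev T H\<^esub> z =
          ttr T (L i) H ((xs i \<otimes>\<^bsub>tlev T (L i)\<^esub> ys i) \<otimes>\<^bsub>tlev T (L i)\<^esub> tres T H (L i) z)"
        by (rule frob[OF LH]) (use xc yc z in auto)
      also have "\<dots> = ttr T (L i) H (xs i \<otimes>\<^bsub>tlev T (L i)\<^esub> (ys i \<otimes>\<^bsub>tlev T (L i)\<^esub> tres T H (L i) z))"
        using xc yc rc by (simp add: RL.m_assoc)
      also have "\<dots> \<in> WW H" by (rule ti_tr[OF TW LH step[OF LH c(2)[OF i] c(3)[OF i]]])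
      finally show "((\<lambda>v. v \<otimes>\<^bsub>tlev T H\<^esub> z) \<circ> (\<lambda>i. ttr T (L i) H (xs i \<otimes>\<^bsub>tlev T (L i)\<^esub> ys i))) i \<in> WW H"
        by simp
    qed
  qed
  finally show ?thesis .
qed

lemma tprod_assoc:
  assumes TX: "tambara_ideal G T XX" and TY: "tambara_ideal G T YY" and TZ: "tambara_ideal G T ZZ"
  shows "tideal_le G (tprod G T (tprod G T XX YY) ZZ) (tprod G T XX (tprod G T YY ZZ))"
  unfolding tprod_def[of G T "tprod G T XX YY" ZZ]
proof (rule tgen_min[OF tprod_ti[OF TX tprod_ti[OF TY TZ]]])
  let ?R = "tprod G T XX (tprod G T YY ZZ)"
  have TR: "tambara_ideal G T ?R" by (rule tprod_ti[OF TX tprod_ti[OF TY TZ]])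
  show "tideal_le G (\<lambda>H. ideal_prod (tlev T H) (tprod G T XX YY H) (ZZ H)) ?R"
    unfolding tideal_le_def
  proof (intro allI impI)
    fix H assume H: "subgroup H G"
    show "ideal_prod (tlev T H) (tprod G T XX YY H) (ZZ H) \<subseteq> ?R H"
    proof (rule iprod_sub[OF ti_ideal[OF TR H]])
      fix w z assume w: "w \<in> tprod G T XX YY H" and z: "z \<in> ZZ H"
      have wV: "w \<in> VV G T XX YY H" by (rule tleD[OF tprod_VV[OF TX TY] H w])
      have zc: "z \<in> carrier (tlev T H)" using ti_carr[OF TZ H] z by blast
      show "w \<otimes>\<^bsub>tlev T H\<^esub> z \<in> ?R H"
      proof (rule VV_mult_into[OF TX TY TR H wV zc])
        fix L x y assume LH: "subgrp_le G L H" and x: "x \<in> XX L" and y: "y \<in> YY L"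
        have Lg: "subgroup L G" by (rule sle_sub1[OF LH])
        have rz: "tres T H L z \<in> ZZ L" by (rule ti_res[OF TZ LH z])
        have yz: "y \<otimes>\<^bsub>tlev T L\<^esub> tres T H L z \<in> tprod G T YY ZZ L"
          by (rule tprodI[where XX=YY and YY=ZZ, OF Lg y rz])
        show "x \<otimes>\<^bsub>tlev T L\<^esub> (y \<otimes>\<^bsub>tlev T L\<^esub> tres T H L z) \<in> ?R L"
          by (rule tprodI[where XX=XX and YY="tprod G T YY ZZ", OF Lg x yz])
      qed
    qed
  qed
qed

lemma tpow_ti: "tambara_ideal G T A \<Longrightarrow> tambara_ideal G T (tpow G T A (Suc k))"
proof (induct k)
  case 0 then show ?case by simp
next
  case (Suc k) then show ?case by (simp add: tprod_ti)
qed

lemma tpow_split: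
  assumes TA: "tambara_ideal G T A" and a: "a \<ge> 1"
  shows "tideal_le G (tpow G T A (a + Suc b)) (tprod G T (tpow G T A a) (tpow G T A (Suc b)))"
proof (induct b)
  case 0
  obtain a' where a': "a = Suc a'" using a by (cases a) auto
  show ?case unfolding a' by (simp add: tle_refl)
next
  case (Suc b)
  obtain a' where a': "a = Suc a'" using a by (cases a) auto
  have T1: "tambara_ideal G T (tpow G T A a)" unfolding a' by (rule tpow_ti[OF TA])
  have T2: "tambara_ideal G T (tpow G T A (Suc b))" by (rule tpow_ti[OF TA])
  have ee: "a + Suc b = Suc (a' + Suc b)" unfolding a' by simp
  have T3: "tambara_ideal G T (tpow G T A (a + Suc b))" unfolding ee by (rule tpow_ti[OF TA])
  have e1: "tpow G T A (a + Suc (Suc b)) = tprod G T (tpow G T A (a + Suc b)) A"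
    unfolding a' by simp
  have l1: "tideal_le G (tprod G T (tpow G T A (a + Suc b)) A) (tprod G T (tprod G T (tpow G T A a) (tpow G T A (Suc b))) A)"
    by (rule tprod_mono[OF T3 TA tprod_ti[OF T1 T2] TA Suc tle_refl])
  have l2: "tideal_le G (tprod G T (tprod G T (tpow G T A a) (tpow G T A (Suc b))) A)
       (tprod G T (tpow G T A a) (tprod G T (tpow G T A (Suc b)) A))"
    by (rule tprod_assoc[OF T1 T2 TA])
  have e2: "tprod G T (tpow G T A (Suc b)) A = tpow G T A (Suc (Suc b))" by simp
  show ?case unfolding e1 using tle_trans[OF l1 l2] unfolding e2 .
qed
lemma tgen1_ti: "subgroup H G \<Longrightarrow> x \<in> carrier (tlev T H) \<Longrightarrow> tambara_ideal G T (tgen1 G T H x)"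
  unfolding tgen1_def by (rule tgen_ti) auto

end

theorem proposition4p29:
  fixes G :: "('g, 'b) monoid_scheme" and T :: "('g, 'r) tambara"
    and I J :: "'g set \<Rightarrow> 'r set"
  assumes "group G" and "finite (carrier G)"
    and "tambara_functor G T"
    and "tambara_ideal G T I" and "tambara_ideal G T J"
  shows "\<forall>H. subgroup H G \<longrightarrow>
           trad G T (tprod G T I J) H = trad G T I H \<inter> trad G T J H"
proof (intro allI impI)
  fix H assume H: "subgroup H G"
  interpret tb: tamb G T
    by (intro tamb.intro tamb_axioms.intro) (use assms in auto)
  have TI: "tambara_ideal G T I" and TJ: "tambara_ideal G T J" using assms by auto
  have TIJ: "tambara_ideal G T (tprod G T I J)" by (rule tb.tprod_ti[OF TI TJ])
  show "trad G T (tprod G T I J) H = trad G T I H \<inter> trad G T J H"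
  proof (rule Set.set_eqI)
    fix x
    show "x \<in> trad G T (tprod G T I J) H \<longleftrightarrow> x \<in> trad G T I H \<inter> trad G T J H"
    proof (cases "x \<in> carrier (tlev T H)")
      case False then show ?thesis unfolding trad_def by simp
    next
      case xc: True
      define A where "A = tgen1 G T H x"
      have TA: "tambara_ideal G T A" unfolding A_def by (rule tb.tgen1_ti[OF H xc])
      show ?thesis
      proof
        assume "x \<in> trad G T (tprod G T I J) H"
        then obtain n where n: "n \<ge> 1" and le: "tideal_le G (tpow G T A n) (tprod G T I J)"
          unfolding trad_def A_def by blast
        have "tideal_le G (tpow G T A n) I" by (rule tb.tle_trans[OF le tb.tprod_le(1)[OF TI TJ]])
        moreover have "tideal_le G (tpow G T A n) J" by (rule tb.tle_trans[OF le tb.tprod_le(2)[OF TI TJ]])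
        ultimately show "x \<in> trad G T I H \<inter> trad G T J H"
          unfolding trad_def A_def using xc n by blast
      next
        assume "x \<in> trad G T I H \<inter> trad G T J H"
        then obtain n m where n: "n \<ge> 1" and leI: "tideal_le G (tpow G T A n) I"
          and m: "m \<ge> 1" and leJ: "tideal_le G (tpow G T A m) J"
          unfolding trad_def A_def by blast
        obtain b where mb: "m = Suc b" using m by (cases m) auto
        obtain n' where nn: "n = Suc n'" using n by (cases n) auto
        have Tn: "tambara_ideal G T (tpow G T A n)" unfolding nn by (rule tb.tpow_ti[OF TA])
        have Tm: "tambara_ideal G T (tpow G T A m)" unfolding mb by (rule tb.tpow_ti[OF TA])
        have l1: "tideal_le G (tpow G T A (n + m)) (tprod G T (tpow G T A n) (tpow G T A m))"
          unfolding mb by (rule tb.tpow_split[OF TA n])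
        have l2: "tideal_le G (tprod G T (tpow G T A n) (tpow G T A m)) (tprod G T I J)"
          by (rule tb.tprod_mono[OF Tn Tm TI TJ leI leJ])
        have "tideal_le G (tpow G T A (n + m)) (tprod G T I J)" by (rule tb.tle_trans[OF l1 l2])
        moreover have "n + m \<ge> 1" using n by simp
        ultimately show "x \<in> trad G T (tprod G T I J) H"
          unfolding trad_def A_def using xc by blast
      qed
    qed
  qed
qed

end
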